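(* Let $p$ be a prime, $d\geq4$ even, $\nu\geq0$, $n\geq2$, $q=p^f$ with $f\in\{1,2,\ldots\}\cup\{\infty\}$ (convention $p^\infty=0$, $f\geq2$ if $p=2$). Let $G=\langle x_1,\ldots,x_d\mid r_0,\ldots,r_\nu\rangle$ be a minimal pro-$p$ presentation with $r_0=x_1^q[x_1,{}_n\,x_2][x_3,x_4][x_5,x_6]\cdots[x_{d-1},x_d]\cdot s$, $r_1,\ldots,r_\nu\in S'$, $s\in S''$, $S$ the closed subgroup generated by $x_3,\ldots,x_d$. Let $\theta\colon G\to1+p\mathbb{Z}_p$ be an orientation such that $(G,\theta)$ is torsion-free. If $(G,\theta)$ is Kummerian, then $\theta(x_i)=1$ for $i=3,\ldots,d$, and either (i) $\theta(x_1)=1$ and $(\theta(x_2)^{-1}-1)^n=-q$; or (ii) $\theta(x_1)\neq1$ and $\theta(x_2)=1$ (which is possible only if $q=0$). In particular, if $-q\notin p^n\mathbb{Z}_p$, then $(G,\theta)$ is not Kummerian for any orientation $\theta\colon G\to1+p\mathbb{Z}_p$.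
   Context: Commutators $[x,y]=x^{-1}y^{-1}xy$, $[y,{}_k x]$ left-normed; $H'$, $H''$ closed commutator subgroups. An orientation is a continuous homomorphism $\theta\colon G\to1+p\mathbb{Z}_p$; $(G,\theta)$ is torsion-free if $p$ odd or $\theta(G)\subseteq1+4\mathbb{Z}_2$ when $p=2$. $(G,\theta)$ is Kummerian if, with $\mathbb{Z}_p(\theta)$ the module $\mathbb{Z}_p$ with action $g.\lambda=\theta(g)\lambda$, the map $H^1(G,\mathbb{Z}_p(\theta)/p^k)\to H^1(G,\mathbb{F}_p)$ is surjective for all $k\geq1$. *)

theory Defs
  imports "HOL-Analysis.Analysis" "HOL-Algebra.Algebra" "HOL-Library.Extended_Nat"
begin

text \<open>An element a of Z_p is represented by its residues a k in {0..p^k-1}, compatible.\<close>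

definition Zp :: "nat \<Rightarrow> (nat \<Rightarrow> int) set" where
  "Zp p = {a. \<forall>k. 0 \<le> a k \<and> a k < int p ^ k \<and> a (Suc k) mod int p ^ k = a k}"

definition zp_of_int :: "nat \<Rightarrow> int \<Rightarrow> (nat \<Rightarrow> int)" where
  "zp_of_int p z = (\<lambda>k. z mod int p ^ k)"

definition zp_one :: "nat \<Rightarrow> (nat \<Rightarrow> int)" where
  "zp_one p = zp_of_int p 1"

definition zp_add :: "nat \<Rightarrow> (nat \<Rightarrow> int) \<Rightarrow> (nat \<Rightarrow> int) \<Rightarrow> (nat \<Rightarrow> int)" where
  "zp_add p a b = (\<lambda>k. (a k + b k) mod int p ^ k)"

definition zp_neg :: "nat \<Rightarrow> (nat \<Rightarrow> int) \<Rightarrow> (nat \<Rightarrow> int)" where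
  "zp_neg p a = (\<lambda>k. (- a k) mod int p ^ k)"

definition zp_mult :: "nat \<Rightarrow> (nat \<Rightarrow> int) \<Rightarrow> (nat \<Rightarrow> int) \<Rightarrow> (nat \<Rightarrow> int)" where
  "zp_mult p a b = (\<lambda>k. (a k * b k) mod int p ^ k)"

fun zp_pow :: "nat \<Rightarrow> (nat \<Rightarrow> int) \<Rightarrow> nat \<Rightarrow> (nat \<Rightarrow> int)" where
  "zp_pow p a 0 = zp_one p"
| "zp_pow p a (Suc m) = zp_mult p (zp_pow p a m) a"

definition zp_inv :: "nat \<Rightarrow> (nat \<Rightarrow> int) \<Rightarrow> (nat \<Rightarrow> int)" where
  "zp_inv p a = (THE b. b \<in> Zp p \<and> zp_mult p a b = zp_one p)"

definition zp_q :: "nat \<Rightarrow> enat \<Rightarrow> (nat \<Rightarrow> int)" where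
  "zp_q p f = (case f of enat m \<Rightarrow> zp_of_int p (int p ^ m) | \<infinity> \<Rightarrow> zp_of_int p 0)"

definition zp_ideal_pow :: "nat \<Rightarrow> nat \<Rightarrow> (nat \<Rightarrow> int) set" where
  "zp_ideal_pow p n = {a \<in> Zp p. a n = 0}"

definition topgroup :: "('a, 'b) monoid_scheme \<Rightarrow> 'a topology \<Rightarrow> bool" where
  "topgroup G T \<longleftrightarrow> group G \<and> topspace T = carrier G
     \<and> continuous_map (prod_topology T T) T (\<lambda>(a, b). a \<otimes>\<^bsub>G\<^esub> b)
     \<and> continuous_map T T (\<lambda>a. inv\<^bsub>G\<^esub> a)"

definition pro_p_group :: "nat \<Rightarrow> ('a, 'b) monoid_scheme \<Rightarrow> 'a topology \<Rightarrow> bool" where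
  "pro_p_group p G T \<longleftrightarrow> topgroup G T \<and> compact_space T \<and> Hausdorff_space T
     \<and> (\<forall>x \<in> topspace T. connected_component_of_set T x = {x})
     \<and> (\<forall>N. openin T N \<and> N \<lhd> G \<longrightarrow> (\<exists>m. card (rcosets\<^bsub>G\<^esub> N) = p ^ m))"

definition cont_hom ::
  "('a, 'b) monoid_scheme \<Rightarrow> 'a topology \<Rightarrow> ('c, 'd) monoid_scheme \<Rightarrow> 'c topology \<Rightarrow> ('a \<Rightarrow> 'c) set" where
  "cont_hom G T H U = {h. h \<in> hom G H \<and> continuous_map T U h}"

text \<open>Free pro-p group on generators x 1, ..., x d: a pro-p group such that every assignment
  of the generators into a finite p-group extends uniquely to a continuous homomorphism
  (finite groups may be taken with carrier in nat up to isomorphism).\<close>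
definition free_pro_p :: "nat \<Rightarrow> ('a, 'b) monoid_scheme \<Rightarrow> 'a topology \<Rightarrow> nat \<Rightarrow> (nat \<Rightarrow> 'a) \<Rightarrow> bool" where
  "free_pro_p p F T d x \<longleftrightarrow> pro_p_group p F T \<and> (\<forall>i\<in>{1..d}. x i \<in> carrier F)
     \<and> (\<forall>(H :: nat monoid) y. group H \<and> finite (carrier H) \<and> (\<exists>m. card (carrier H) = p ^ m)
          \<and> (\<forall>i\<in>{1..d}. y i \<in> carrier H) \<longrightarrow>
          (\<exists>!h. h \<in> cont_hom F T H (discrete_topology (carrier H)) \<and> h \<in> extensional (carrier F)
                \<and> (\<forall>i\<in>{1..d}. h (x i) = y i)))"

definition comm :: "('a, 'b) monoid_scheme \<Rightarrow> 'a \<Rightarrow> 'a \<Rightarrow> 'a" where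
  "comm G a b = inv\<^bsub>G\<^esub> a \<otimes>\<^bsub>G\<^esub> inv\<^bsub>G\<^esub> b \<otimes>\<^bsub>G\<^esub> a \<otimes>\<^bsub>G\<^esub> b"

fun lcomm :: "('a, 'b) monoid_scheme \<Rightarrow> 'a \<Rightarrow> 'a \<Rightarrow> nat \<Rightarrow> 'a" where
  "lcomm G y x 0 = y"
| "lcomm G y x (Suc k) = comm G (lcomm G y x k) x"

fun comm_prod :: "('a, 'b) monoid_scheme \<Rightarrow> (nat \<Rightarrow> 'a) \<Rightarrow> nat \<Rightarrow> 'a" where
  "comm_prod G x 0 = \<one>\<^bsub>G\<^esub>"
| "comm_prod G x (Suc m) = comm_prod G x m \<otimes>\<^bsub>G\<^esub> comm G (x (2 * m + 3)) (x (2 * m + 4))"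

definition closed_gen :: "('a, 'b) monoid_scheme \<Rightarrow> 'a topology \<Rightarrow> 'a set \<Rightarrow> 'a set" where
  "closed_gen G T A = T closure_of (generate G A)"

definition closed_derived :: "('a, 'b) monoid_scheme \<Rightarrow> 'a topology \<Rightarrow> 'a set \<Rightarrow> 'a set" where
  "closed_derived G T H = closed_gen G T {comm G a b | a b. a \<in> H \<and> b \<in> H}"

definition closed_normal_gen :: "('a, 'b) monoid_scheme \<Rightarrow> 'a topology \<Rightarrow> 'a set \<Rightarrow> 'a set" where
  "closed_normal_gen G T A =
     closed_gen G T {inv\<^bsub>G\<^esub> g \<otimes>\<^bsub>G\<^esub> r \<otimes>\<^bsub>G\<^esub> g | g r. g \<in> carrier G \<and> r \<in> A}"

definition qpow :: "('a, 'b) monoid_scheme \<Rightarrow> nat \<Rightarrow> enat \<Rightarrow> 'a \<Rightarrow> 'a" where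
  "qpow G p f a = (case f of enat m \<Rightarrow> a [^]\<^bsub>G\<^esub> (p ^ m) | \<infinity> \<Rightarrow> \<one>\<^bsub>G\<^esub>)"

definition orientation :: "nat \<Rightarrow> ('a, 'b) monoid_scheme \<Rightarrow> 'a topology \<Rightarrow> ('a \<Rightarrow> nat \<Rightarrow> int) \<Rightarrow> bool" where
  "orientation p G T \<theta> \<longleftrightarrow>
     (\<forall>g\<in>carrier G. \<theta> g \<in> Zp p \<and> \<theta> g 1 = 1 mod int p)
     \<and> (\<forall>g\<in>carrier G. \<forall>h\<in>carrier G. \<theta> (g \<otimes>\<^bsub>G\<^esub> h) = zp_mult p (\<theta> g) (\<theta> h))
     \<and> (\<forall>k c. openin T {g \<in> carrier G. \<theta> g k = c})"

definition torsion_free_or :: "nat \<Rightarrow> ('a, 'b) monoid_scheme \<Rightarrow> ('a \<Rightarrow> nat \<Rightarrow> int) \<Rightarrow> bool" where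
  "torsion_free_or p G \<theta> \<longleftrightarrow> odd p \<or> (p = 2 \<and> (\<forall>g\<in>carrier G. \<theta> g 2 = 1))"

text \<open>continuous 1-cocycles G \<rightarrow> Z_p(\<theta>)/p^k (residues in {0..p^k-1})\<close>
definition cocycle :: "nat \<Rightarrow> ('a, 'b) monoid_scheme \<Rightarrow> 'a topology \<Rightarrow> ('a \<Rightarrow> nat \<Rightarrow> int) \<Rightarrow> nat
     \<Rightarrow> ('a \<Rightarrow> int) \<Rightarrow> bool" where
  "cocycle p G T \<theta> k c \<longleftrightarrow>
     (\<forall>g\<in>carrier G. 0 \<le> c g \<and> c g < int p ^ k)
     \<and> (\<forall>v. openin T {g \<in> carrier G. c g = v})
     \<and> (\<forall>g\<in>carrier G. \<forall>h\<in>carrier G. c (g \<otimes>\<^bsub>G\<^esub> h) = (c g + \<theta> g k * c h) mod int p ^ k)"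

definition coboundary :: "nat \<Rightarrow> ('a, 'b) monoid_scheme \<Rightarrow> ('a \<Rightarrow> nat \<Rightarrow> int) \<Rightarrow> nat
     \<Rightarrow> ('a \<Rightarrow> int) \<Rightarrow> bool" where
  "coboundary p G \<theta> k b \<longleftrightarrow> (\<exists>m. \<forall>g\<in>carrier G. b g = ((\<theta> g k - 1) * m) mod int p ^ k)"

text \<open>Kummerian: the reduction map H^1(G, Z_p(\<theta>)/p^k) \<rightarrow> H^1(G, F_p) is surjective for all k \<ge> 1,
  i.e. every class of H^1(G, F_p) = H^1(G, Z_p(\<theta>)/p) is the reduction of a class mod p^k.\<close>
definition kummerian :: "nat \<Rightarrow> ('a, 'b) monoid_scheme \<Rightarrow> 'a topology \<Rightarrow> ('a \<Rightarrow> nat \<Rightarrow> int) \<Rightarrow> bool" where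
  "kummerian p G T \<theta> \<longleftrightarrow>
     (\<forall>k\<ge>1. \<forall>c1. cocycle p G T \<theta> 1 c1 \<longrightarrow>
        (\<exists>c. cocycle p G T \<theta> k c \<and> (\<exists>b. coboundary p G \<theta> 1 b \<and>
              (\<forall>g\<in>carrier G. c g mod int p = (c1 g + b g) mod int p))))"

end

theory Submission
  imports Defs "HOL-Number_Theory.Cong"
begin

lemma Zp_range: assumes "a \<in> Zp p" shows "0 \<le> a k" "a k < int p ^ k"
  using assms by (auto simp: Zp_def)

lemma Zp_mod_le:
  assumes "a \<in> Zp p" "j \<le> k"
  shows "a k mod int p ^ j = a j"
  using assms(2)
proof (induction k)
  case 0
  then show ?case using Zp_range[OF assms(1), of 0] by simp
next
  case (Suc k)
  show ?case
  proof (cases "j = Suc k")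
    case True
    then show ?thesis using Zp_range[OF assms(1), of "Suc k"] by simp
  next
    case False
    then have jk: "j \<le> k" using Suc by simp
    have "a (Suc k) mod int p ^ j = (a (Suc k) mod int p ^ k) mod int p ^ j"
      by (simp add: mod_mod_cancel le_imp_power_dvd jk)
    also have "\<dots> = a k mod int p ^ j" using assms(1) by (simp add: Zp_def)
    also have "\<dots> = a j" using Suc.IH jk by simp
    finally show ?thesis .
  qed
qed

lemma Zp_cong_le:
  assumes "a \<in> Zp p" "j \<le> k"
  shows "[a k = a j] (mod int p ^ j)"
  using Zp_mod_le[OF assms] Zp_range[OF assms(1), of j] by (simp add: cong_def)

lemma zp_pow_level: "zp_pow p a m k = (a k) ^ m mod int p ^ k"
proof (induction m)
  case 0 then show ?case by (simp add: zp_one_def zp_of_int_def)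
next
  case (Suc m)
  then show ?case by (simp add: zp_mult_def mod_mult_left_eq mod_mult_right_eq mult.commute)
qed

lemma Zp_unit_coprime:
  assumes p: "Factorial_Ring.prime p" and a: "a \<in> Zp p" and a1: "a 1 = 1"
  shows "coprime (a k) (int p ^ k)"
proof (cases "k = 0")
  case True then show ?thesis by simp
next
  case False
  then have "a k mod int p = 1" using Zp_mod_le[OF a, of 1 k] a1 by simp
  then have "\<not> int p dvd a k" using p
    by (metis dvd_imp_mod_0 prime_nat_iff_prime zero_neq_one)
  then have "coprime (int p) (a k)" using p by (simp add: prime_imp_coprime)
  then show ?thesis by (simp add: coprime_commute)
qed

lemma inv_unique:
  fixes u v w M :: int
  assumes "coprime u M" "0 \<le> v" "v < M" "0 \<le> w" "w < M" "[u * v = 1] (mod M)" "[u * w = 1] (mod M)"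
  shows "v = w"
proof -
  have "[u * v = u * w] (mod M)" using assms(6,7) by (metis cong_sym cong_trans)
  then have "[v = w] (mod M)" using assms(1) by (simp add: cong_mult_lcancel)
  then show ?thesis using assms by (simp add: cong_less_imp_eq_int)
qed

lemma inv_exists:
  fixes u M :: int
  assumes "coprime u M" "M > 0"
  shows "\<exists>v. 0 \<le> v \<and> v < M \<and> [u * v = 1] (mod M)"
proof -
  obtain x where x: "[u * x = 1] (mod M)" using cong_solve_coprime_int[OF assms(1)] by blast
  have "[u * (x mod M) = 1] (mod M)" using x by (simp add: cong_def mod_mult_right_eq)
  then show ?thesis using assms(2) by (intro exI[of _ "x mod M"]) simp
qed

lemma zp_inv_prop:
  assumes p: "Factorial_Ring.prime p" and u: "u \<in> Zp p" and u1: "u 1 = 1"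
  shows "zp_inv p u \<in> Zp p" "[u k * zp_inv p u k = 1] (mod int p ^ k)"
proof -
  have pp: "p > 0" using p prime_gt_0_nat by blast
  define b where "b k = (SOME v. 0 \<le> v \<and> v < int p ^ k \<and> [u k * v = 1] (mod int p ^ k))" for k
  have bk: "0 \<le> b k \<and> b k < int p ^ k \<and> [u k * b k = 1] (mod int p ^ k)" for k
    unfolding b_def
    by (rule someI_ex, rule inv_exists[OF Zp_unit_coprime[OF p u u1]]) (simp add: pp)
  have bZ: "b \<in> Zp p"
  proof -
    have "b (Suc k) mod int p ^ k = b k" for k
    proof (rule inv_unique[OF Zp_unit_coprime[OF p u u1, of k]])
      show "0 \<le> b (Suc k) mod int p ^ k" "b (Suc k) mod int p ^ k < int p ^ k" using pp by simp_all
      show "0 \<le> b k" "b k < int p ^ k" using bk by auto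
      show "[u k * b k = 1] (mod int p ^ k)" using bk by auto
      have c1: "[u (Suc k) = u k] (mod int p ^ k)" using Zp_cong_le[OF u, of k "Suc k"] by simp
      have c0: "[u (Suc k) * b (Suc k) = 1] (mod int p ^ Suc k)" using bk[of "Suc k"] by blast
      have c2: "[u (Suc k) * b (Suc k) = 1] (mod int p ^ k)"
        using c0 by (rule cong_dvd_modulus) (simp add: le_imp_power_dvd)
      have "[u k * (b (Suc k) mod int p ^ k) = u (Suc k) * b (Suc k)] (mod int p ^ k)"
        by (rule cong_mult[OF cong_sym[OF c1]]) (simp add: cong_def)
      then show "[u k * (b (Suc k) mod int p ^ k) = 1] (mod int p ^ k)" using c2 by (rule cong_trans)
    qed
    then show ?thesis using bk unfolding Zp_def by auto
  qed
  have bm: "zp_mult p u b = zp_one p"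
    using bk by (auto simp: zp_mult_def zp_one_def zp_of_int_def cong_def fun_eq_iff)
  have uniq: "b' = b" if "b' \<in> Zp p" "zp_mult p u b' = zp_one p" for b'
  proof
    fix k
    have "(u k * b' k) mod int p ^ k = 1 mod int p ^ k" using that(2)
      by (auto simp: zp_mult_def zp_one_def zp_of_int_def fun_eq_iff)
    then have "[u k * b' k = 1] (mod int p ^ k)" by (simp add: cong_def)
    then show "b' k = b k"
      using inv_unique[OF Zp_unit_coprime[OF p u u1, of k]] bk[of k] Zp_range[OF that(1), of k] by blast
  qed
  have "zp_inv p u = b" unfolding zp_inv_def
  proof (rule the_equality)
    show "b \<in> Zp p \<and> zp_mult p u b = zp_one p" using bZ bm by simp
    show "\<And>b'. b' \<in> Zp p \<and> zp_mult p u b' = zp_one p \<Longrightarrow> b' = b" using uniq by blast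
  qed
  then show "zp_inv p u \<in> Zp p" "[u k * zp_inv p u k = 1] (mod int p ^ k)" using bZ bk by auto
qed

lemma pow_cong_lin:
  fixes P t :: int
  shows "[(1 + P * t) ^ i = 1 + int i * P * t] (mod P ^ 2)"
proof (induction i)
  case 0 then show ?case by simp
next
  case (Suc i)
  have "[(1 + P * t) ^ Suc i = (1 + int i * P * t) * (1 + P * t)] (mod P ^ 2)"
    using Suc by (simp add: cong_mult mult.commute)
  moreover have "[(1 + int i * P * t) * (1 + P * t) = 1 + int (Suc i) * P * t] (mod P ^ 2)"
  proof -
    have "(1 + int i * P * t) * (1 + P * t) - (1 + int (Suc i) * P * t) = P^2 * (int i * t * t)"
      by (simp add: algebra_simps power2_eq_square)
    then show ?thesis unfolding cong_iff_dvd_diff by (metis dvd_triv_left)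
  qed
  ultimately show ?case by (rule cong_trans)
qed

lemma gsum2: "2 * (\<Sum>i<n. int i) = int n * (int n - 1)"
  by (induction n) (simp_all add: algebra_simps)

lemma geom_val:
  fixes a :: int
  assumes p: "Factorial_Ring.prime p" and a1: "[a = 1] (mod int p)"
    and a4: "p = 2 \<longrightarrow> [a = 1] (mod 4)"
  shows "[(\<Sum>i<p. a ^ i) = int p] (mod (int p)^2)"
proof (cases "p = 2")
  case True
  have "(\<Sum>i<p. a ^ i) = 1 + a" using True by (simp add: numeral_2_eq_2)
  moreover have "[1 + a = 2] (mod 4)" using a4 True
    by (metis cong_add_lcancel one_add_one)
  ultimately show ?thesis using True by simp
next
  case False
  have "p > 2" using prime_ge_2_nat[OF p] False by linarith
  then have "odd p" by (rule prime_odd_nat[OF p])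
  then obtain e where e: "p = 2 * e + 1" by (rule oddE)
  have "[1 = a] (mod int p)" using a1 by (rule cong_sym)
  then obtain t where t: "a = 1 + int p * t" by (auto simp: cong_iff_lin)
  have A: "[(\<Sum>i<p. a ^ i) = (\<Sum>i<p. 1 + int i * int p * t)] (mod (int p)^2)"
    unfolding t by (rule cong_sum) (rule pow_cong_lin)
  have B: "(\<Sum>i<p. 1 + int i * int p * t) = int p + int p * t * (\<Sum>i<p. int i)"
  proof -
    have "(\<Sum>i<p. 1 + int i * int p * t) = (\<Sum>i<p. 1) + (\<Sum>i<p. int p * t * int i)"
      by (simp add: sum.distrib mult.commute mult.left_commute)
    also have "\<dots> = int p + int p * t * (\<Sum>i<p. int i)"
      by (simp add: sum_distrib_left)
    finally show ?thesis .
  qed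
  have C: "(\<Sum>i<p. int i) = int p * int e"
    using gsum2[of p] e by (simp add: algebra_simps)
  have D: "[int p + int p * t * (int p * int e) = int p] (mod (int p)^2)"
  proof -
    have "int p + int p * t * (int p * int e) - int p = (int p)^2 * (t * int e)"
      by (simp add: algebra_simps power2_eq_square)
    then show ?thesis unfolding cong_iff_dvd_diff by (metis dvd_triv_left)
  qed
  show ?thesis using A D unfolding B C by (rule cong_trans)
qed

lemma val_step:
  fixes a :: int
  assumes p: "Factorial_Ring.prime p" and a1: "[a = 1] (mod int p)"
    and a4: "p = 2 \<longrightarrow> [a = 1] (mod 4)"
    and nd: "\<not> int p ^ j dvd (a - 1)"
  shows "\<not> int p ^ Suc j dvd (a ^ p - 1)"
proof
  assume H: "int p ^ Suc j dvd (a ^ p - 1)"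
  have pi: "Factorial_Ring.prime (int p)" using p by simp
  have "[int p = (\<Sum>i<p. a ^ i)] (mod (int p)^2)" using geom_val[OF p a1 a4] by (rule cong_sym)
  then obtain k where k: "(\<Sum>i<p. a ^ i) = int p + (int p)^2 * k" by (auto simp: cong_iff_lin)
  define S' where "S' = 1 + int p * k"
  have S: "(\<Sum>i<p. a ^ i) = int p * S'" unfolding S'_def k by (simp add: algebra_simps power2_eq_square)
  have "\<not> int p dvd S'"
  proof
    assume "int p dvd S'"
    then have "int p dvd 1" unfolding S'_def using dvd_add_left_iff[of "int p" "int p * k" 1] by simp
    then have "int p \<le> 1" by (simp add: zdvd_imp_le)
    then show False using prime_ge_2_nat[OF p] by linarith
  qed
  then have "coprime (int p) S'" by (rule prime_imp_coprime[OF pi])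
  then have cop: "coprime (int p ^ j) S'" by simp
  have "a ^ p - 1 = (a - 1) * (int p * S')" using power_diff_1_eq[of a p] unfolding S .
  also have "\<dots> = int p * ((a - 1) * S')" by (simp only: ac_simps)
  finally have "int p * int p ^ j dvd int p * ((a - 1) * S')" using H by simp
  moreover have "int p \<noteq> 0" using prime_gt_0_nat[OF p] by simp
  ultimately have "int p ^ j dvd (a - 1) * S'" using dvd_mult_cancel_left by blast
  then have "int p ^ j dvd (a - 1)" using cop by (simp add: coprime_dvd_mult_left_iff)
  then show False using nd by simp
qed

lemma torsion:
  fixes a :: int
  assumes p: "Factorial_Ring.prime p" and a1: "[a = 1] (mod int p)"
    and a4: "p = 2 \<longrightarrow> [a = 1] (mod 4)"
    and nd: "\<not> int p ^ j dvd (a - 1)"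
  shows "\<not> int p ^ (j + m) dvd (a ^ (p ^ m) - 1)"
proof (induction m)
  case 0 then show ?case using nd by simp
next
  case (Suc m)
  have b1: "[a ^ (p ^ m) = 1] (mod int p)" using cong_pow[OF a1, of "p^m"] by simp
  have b4: "p = 2 \<longrightarrow> [a ^ (p ^ m) = 1] (mod 4)" using cong_pow[of a 1 4 "p^m"] a4 by auto
  have "\<not> int p ^ Suc (j + m) dvd ((a ^ (p ^ m)) ^ p - 1)"
    by (rule val_step[OF p b1 b4 Suc])
  then show ?case by (simp add: power_mult[symmetric] mult.commute)
qed

lemma lin_dvd:
  fixes \<alpha> :: "nat \<Rightarrow> int" and P :: int
  assumes I: "finite I"
    and sol: "\<forall>i0\<in>I. \<exists>c. (\<forall>i\<in>I. [c i = (if i = i0 then 1 else 0)] (mod P))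
                   \<and> [(\<Sum>i\<in>I. \<alpha> i * c i) = 0] (mod P ^ k)"
  shows "\<forall>i\<in>I. P ^ k dvd \<alpha> i"
proof -
  have "w \<le> k \<Longrightarrow> \<forall>i\<in>I. P ^ w dvd \<alpha> i" for w
  proof (induction w)
    case 0 then show ?case by simp
  next
    case (Suc w)
    then have IH: "\<forall>i\<in>I. P ^ w dvd \<alpha> i" by simp
    show ?case
    proof
      fix i0 assume i0: "i0 \<in> I"
      obtain c where c1: "\<forall>i\<in>I. [c i = (if i = i0 then 1 else 0)] (mod P)"
        and c2: "[(\<Sum>i\<in>I. \<alpha> i * c i) = 0] (mod P ^ k)" using sol i0 by blast
      define e where "e i = (if i = i0 then 1 else (0::int))" for i
      have d1: "P ^ Suc w dvd (\<Sum>i\<in>I. \<alpha> i * (c i - e i))"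
      proof (rule dvd_sum)
        fix i assume "i \<in> I"
        then have "P ^ w dvd \<alpha> i" "P dvd (c i - e i)" using IH c1
          by (auto simp: e_def cong_iff_dvd_diff)
        then have "P ^ w * P dvd \<alpha> i * (c i - e i)" by (rule mult_dvd_mono)
        then show "P ^ Suc w dvd \<alpha> i * (c i - e i)" by (simp add: mult.commute)
      qed
      have d2: "P ^ Suc w dvd (\<Sum>i\<in>I. \<alpha> i * c i)"
        using c2 Suc.prems by (meson cong_0_iff dvd_trans le_imp_power_dvd)
      have "(\<Sum>i\<in>I. \<alpha> i * e i) = (\<Sum>i\<in>I. if i = i0 then \<alpha> i else 0)"
        by (rule sum.cong) (auto simp: e_def)
      also have "\<dots> = \<alpha> i0" using I i0 by simp
      finally have "(\<Sum>i\<in>I. \<alpha> i * e i) = \<alpha> i0" .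
      moreover have "(\<Sum>i\<in>I. \<alpha> i * c i) - (\<Sum>i\<in>I. \<alpha> i * (c i - e i)) = (\<Sum>i\<in>I. \<alpha> i * e i)"
        by (simp add: sum_subtractf[symmetric] algebra_simps)
      ultimately have "\<alpha> i0 = (\<Sum>i\<in>I. \<alpha> i * c i) - (\<Sum>i\<in>I. \<alpha> i * (c i - e i))" by simp
      then show "P ^ Suc w dvd \<alpha> i0" using d1 d2 by simp
    qed
  qed
  then show ?thesis by simp
qed

lemma val2:
  fixes XX YY :: int
  assumes p: "Factorial_Ring.prime p" and ee: "ee \<ge> 1"
    and h: "int p ^ (k0 + ee * j) dvd XX ^ ee * YY" and nd: "\<not> int p ^ k0 dvd YY"
  shows "int p ^ j dvd XX"
proof (cases "XX = 0")
  case True then show ?thesis by simp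
next
  case False
  have pi: "Factorial_Ring.prime (int p)" using p by simp
  have Y0: "YY \<noteq> 0" using nd by auto
  have nu: "\<not> is_unit (int p)" using pi not_prime_unit by blast
  have XY0: "XX ^ ee * YY \<noteq> 0" using False Y0 by simp
  have "k0 + ee * j \<le> Factorial_Ring.multiplicity (int p) (XX ^ ee * YY)"
    using h power_dvd_iff_le_multiplicity[OF XY0 nu] by simp
  also have "\<dots> = ee * Factorial_Ring.multiplicity (int p) XX + Factorial_Ring.multiplicity (int p) YY"
    using pi False Y0 by (simp add: prime_elem_multiplicity_mult_distrib prime_elem_multiplicity_power_distrib)
  finally have A: "k0 + ee * j \<le> ee * Factorial_Ring.multiplicity (int p) XX + Factorial_Ring.multiplicity (int p) YY" .
  have "Factorial_Ring.multiplicity (int p) YY < k0"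
    using nd power_dvd_iff_le_multiplicity[OF Y0 nu] by simp
  with A have "ee * j < ee * Factorial_Ring.multiplicity (int p) XX" by linarith
  then have "j \<le> Factorial_Ring.multiplicity (int p) XX" by (simp add: mult_less_cancel1 less_imp_le)
  then show ?thesis using power_dvd_iff_le_multiplicity[OF False nu] by simp
qed

definition muinv :: "int \<Rightarrow> int \<Rightarrow> int" where
  "muinv M x = (SOME u. [x * u = 1] (mod M))"

lemma muinv: "coprime x M \<Longrightarrow> [x * muinv M x = 1] (mod M)"
  unfolding muinv_def by (rule someI_ex) (rule cong_solve_coprime_int)

lemma muinv_coprime: "coprime x M \<Longrightarrow> coprime (muinv M x) M"
  using muinv[of x M] by (metis cong_imp_coprime cong_sym coprime_1_left coprime_mult_left_iff)

lemma muinv_1: "coprime x M \<Longrightarrow> [x = 1] (mod M) \<Longrightarrow> [muinv M x = 1] (mod M)"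
proof -
  assume a: "coprime x M" "[x = 1] (mod M)"
  have "[x * muinv M x = 1 * muinv M x] (mod M)" by (rule cong_mult[OF a(2) cong_refl])
  then show ?thesis using muinv[OF a(1)] by (metis cong_sym cong_trans mult_1)
qed

lemma cancel1: "coprime k (M::int) \<Longrightarrow> [k * a = k] (mod M) \<Longrightarrow> [a = 1] (mod M)"
  using cong_mult_lcancel[of k M a 1] by simp

locale cocyc = group F for F :: "('a, 'b) monoid_scheme" (structure) +
  fixes Th C :: "'a \<Rightarrow> int" and M :: int
  assumes Th_cop: "\<And>a. a \<in> carrier F \<Longrightarrow> coprime (Th a) M"
    and Th_mult: "\<And>a b. a \<in> carrier F \<Longrightarrow> b \<in> carrier F \<Longrightarrow> [Th (a \<otimes> b) = Th a * Th b] (mod M)"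
    and C_mult: "\<And>a b. a \<in> carrier F \<Longrightarrow> b \<in> carrier F \<Longrightarrow> [C (a \<otimes> b) = C a + Th a * C b] (mod M)"
begin

abbreviation mu where "mu x \<equiv> muinv M x"

lemma mi1: "x \<in> carrier F \<Longrightarrow> y \<in> carrier F \<Longrightarrow> x \<otimes> y \<otimes> inv y = x"
  by (simp add: m_assoc)
lemma mi2: "x \<in> carrier F \<Longrightarrow> y \<in> carrier F \<Longrightarrow> x \<otimes> inv y \<otimes> y = x"
  by (simp add: m_assoc)

lemma Th_one: "[Th \<one> = 1] (mod M)"
proof -
  have "[Th \<one> * Th \<one> = Th \<one>] (mod M)" using Th_mult[of \<one> \<one>] by (simp add: cong_sym)
  then show ?thesis using Th_cop[OF one_closed] cancel1 by blast
qed

lemma C_one: "[C \<one> = 0] (mod M)"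
proof -
  have "[C \<one> = C \<one> + Th \<one> * C \<one>] (mod M)" using C_mult[of \<one> \<one>] by simp
  then have "M dvd Th \<one> * C \<one>" by (simp add: cong_iff_dvd_diff)
  moreover have "coprime M (Th \<one>)" using Th_cop[OF one_closed] by (simp add: coprime_commute)
  ultimately have "M dvd C \<one>" by (simp add: coprime_dvd_mult_right_iff)
  then show ?thesis by (simp add: cong_0_iff)
qed

lemma comm_closed: "a \<in> carrier F \<Longrightarrow> b \<in> carrier F \<Longrightarrow> comm F a b \<in> carrier F"
  by (simp add: comm_def)

lemma comm_eq: "a \<in> carrier F \<Longrightarrow> b \<in> carrier F \<Longrightarrow> b \<otimes> a \<otimes> comm F a b = a \<otimes> b"
  by (simp add: comm_def m_assoc[symmetric] mi1)

lemma Th_comm: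
  assumes a: "a \<in> carrier F" and b: "b \<in> carrier F"
  shows "[Th (comm F a b) = 1] (mod M)"
proof -
  have cc: "comm F a b \<in> carrier F" using a b by (rule comm_closed)
  have "[(Th a * Th b) * Th (comm F a b) = (Th b * Th a) * Th (comm F a b)] (mod M)"
    by (simp add: mult.commute)
  also have "[(Th b * Th a) * Th (comm F a b) = Th (b \<otimes> a) * Th (comm F a b)] (mod M)"
    using Th_mult[OF b a] by (intro cong_mult cong_refl) (rule cong_sym)
  also have "[Th (b \<otimes> a) * Th (comm F a b) = Th (b \<otimes> a \<otimes> comm F a b)] (mod M)"
    by (rule cong_sym, rule Th_mult) (use a b cc in auto)
  also have "Th (b \<otimes> a \<otimes> comm F a b) = Th (a \<otimes> b)" using comm_eq[OF a b] by simp
  also have "[Th (a \<otimes> b) = Th a * Th b] (mod M)" using a b by (rule Th_mult)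
  finally have "[(Th a * Th b) * Th (comm F a b) = (Th a * Th b)] (mod M)" .
  moreover have "coprime (Th a * Th b) M" using Th_cop a b by simp
  ultimately show ?thesis using cancel1 by blast
qed

lemma C_comm0:
  assumes a: "a \<in> carrier F" and b: "b \<in> carrier F"
  shows "[Th a * Th b * C (comm F a b) = (Th a - 1) * C b - (Th b - 1) * C a] (mod M)"
proof -
  have cc: "comm F a b \<in> carrier F" using a b by (rule comm_closed)
  have "[C a + Th a * C b = C (a \<otimes> b)] (mod M)" by (rule cong_sym, rule C_mult[OF a b])
  also have "C (a \<otimes> b) = C (b \<otimes> a \<otimes> comm F a b)" using comm_eq[OF a b] by simp
  also have "[C (b \<otimes> a \<otimes> comm F a b) = C (b \<otimes> a) + Th (b \<otimes> a) * C (comm F a b)] (mod M)"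
    using a b cc by (intro C_mult) auto
  also have "[C (b \<otimes> a) + Th (b \<otimes> a) * C (comm F a b) = (C b + Th b * C a) + (Th b * Th a) * C (comm F a b)] (mod M)"
    using C_mult[OF b a] Th_mult[OF b a] by (intro cong_add cong_mult) auto
  finally have "[C a + Th a * C b - (C b + Th b * C a) = Th b * Th a * C (comm F a b)] (mod M)"
    by (simp add: cong_iff_dvd_diff algebra_simps)
  then show ?thesis by (simp add: algebra_simps cong_sym_eq)
qed

lemma C_comm:
  assumes a: "a \<in> carrier F" and b: "b \<in> carrier F"
  shows "[C (comm F a b) = mu (Th a) * mu (Th b) * ((Th a - 1) * C b - (Th b - 1) * C a)] (mod M)"
proof -
  have ua: "[Th a * mu (Th a) = 1] (mod M)" using muinv Th_cop a by blast
  have ub: "[Th b * mu (Th b) = 1] (mod M)" using muinv Th_cop b by blast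
  have "C (comm F a b) = (1 * 1) * C (comm F a b)" by simp
  also have "[(1 * 1) * C (comm F a b) = ((Th a * mu (Th a)) * (Th b * mu (Th b))) * C (comm F a b)] (mod M)"
    using cong_sym[OF ua] cong_sym[OF ub] by (intro cong_mult cong_refl)
  also have "((Th a * mu (Th a)) * (Th b * mu (Th b))) * C (comm F a b) = (mu (Th a) * mu (Th b)) * (Th a * Th b * C (comm F a b))"
    by (simp add: ac_simps)
  also have "[(mu (Th a) * mu (Th b)) * (Th a * Th b * C (comm F a b)) = (mu (Th a) * mu (Th b)) * ((Th a - 1) * C b - (Th b - 1) * C a)] (mod M)"
    using C_comm0[OF a b] by (intro cong_mult cong_refl)
  finally show ?thesis by simp
qed

lemma Th_pow:
  assumes a: "a \<in> carrier F"
  shows "[Th (a [^] (N::nat)) = Th a ^ N] (mod M)"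
proof (induction N)
  case 0 then show ?case using Th_one by simp
next
  case (Suc N)
  have "[Th (a [^] Suc N) = Th (a [^] N) * Th a] (mod M)" using a by (simp add: Th_mult)
  also have "[Th (a [^] N) * Th a = Th a ^ N * Th a] (mod M)" using Suc by (intro cong_mult cong_refl)
  finally show ?case by (simp add: mult.commute)
qed

lemma C_pow:
  assumes a: "a \<in> carrier F"
  shows "[C (a [^] (N::nat)) = C a * (\<Sum>i<N. Th a ^ i)] (mod M)"
proof (induction N)
  case 0 then show ?case using C_one by simp
next
  case (Suc N)
  have "[C (a [^] Suc N) = C (a [^] N) + Th (a [^] N) * C a] (mod M)" using a by (simp add: C_mult)
  also have "[C (a [^] N) + Th (a [^] N) * C a = C a * (\<Sum>i<N. Th a ^ i) + Th a ^ N * C a] (mod M)"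
    using Suc Th_pow[OF a, of N] by (intro cong_add cong_mult cong_refl)
  finally show ?case by (simp add: algebra_simps)
qed

lemma lcomm_closed: "a \<in> carrier F \<Longrightarrow> b \<in> carrier F \<Longrightarrow> lcomm F a b m \<in> carrier F"
  by (induction m) (simp_all add: comm_closed)

lemma mu_1: "a \<in> carrier F \<Longrightarrow> [Th a = 1] (mod M) \<Longrightarrow> [mu (Th a) = 1] (mod M)"
  using muinv_1 Th_cop by blast

lemma lcomm:
  assumes a: "a \<in> carrier F" and b: "b \<in> carrier F"
  shows "[Th (lcomm F a b (Suc m)) = 1] (mod M) \<and>
         [C (lcomm F a b (Suc m)) = (mu (Th b) - 1) ^ m * C (comm F a b)] (mod M)"
proof (induction m)
  case 0 then show ?case using Th_comm[OF a b] by simp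
next
  case (Suc m)
  define L where "L = lcomm F a b (Suc m)"
  have Lc: "L \<in> carrier F" unfolding L_def using a b by (rule lcomm_closed)
  have thL: "[Th L = 1] (mod M)" using Suc L_def by simp
  have muL: "[mu (Th L) = 1] (mod M)" using mu_1[OF Lc thL] .
  have ub: "[Th b * mu (Th b) = 1] (mod M)" using muinv Th_cop b by blast
  have eq: "lcomm F a b (Suc (Suc m)) = comm F L b" unfolding L_def by simp
  have "[C (comm F L b) = mu (Th L) * mu (Th b) * ((Th L - 1) * C b - (Th b - 1) * C L)] (mod M)"
    using Lc b by (rule C_comm)
  also have "[mu (Th L) * mu (Th b) * ((Th L - 1) * C b - (Th b - 1) * C L)
      = 1 * mu (Th b) * ((1 - 1) * C b - (Th b - 1) * C L)] (mod M)"
    using muL thL by (intro cong_mult cong_diff cong_refl)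
  also have "1 * mu (Th b) * ((1 - 1) * C b - (Th b - 1) * C L) = - (mu (Th b) * (Th b - 1) * C L)"
    by simp
  also have "[- (mu (Th b) * (Th b - 1) * C L) = (mu (Th b) - 1) * C L] (mod M)"
  proof -
    have "- (mu (Th b) * (Th b - 1) * C L) - (mu (Th b) - 1) * C L = - ((Th b * mu (Th b) - 1) * C L)"
      by (simp add: algebra_simps)
    moreover have "M dvd (Th b * mu (Th b) - 1) * C L" using ub by (simp add: cong_iff_dvd_diff)
    ultimately show ?thesis by (simp add: cong_iff_dvd_diff)
  qed
  also have "[(mu (Th b) - 1) * C L = (mu (Th b) - 1) * ((mu (Th b) - 1) ^ m * C (comm F a b))] (mod M)"
    using Suc L_def by (intro cong_mult cong_refl) simp
  finally show ?case using eq Th_comm[OF Lc b] by (simp add: ac_simps)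
qed

lemma comm_prod:
  assumes "\<forall>j<m. x (2*j+3) \<in> carrier F \<and> x (2*j+4) \<in> carrier F"
  shows "comm_prod F x m \<in> carrier F \<and> [Th (comm_prod F x m) = 1] (mod M) \<and>
         [C (comm_prod F x m) = (\<Sum>j<m. C (comm F (x (2*j+3)) (x (2*j+4))))] (mod M)"
  using assms
proof (induction m)
  case 0 then show ?case using Th_one C_one by simp
next
  case (Suc m)
  define P where "P = comm_prod F x m"
  define K where "K = comm F (x (2*m+3)) (x (2*m+4))"
  have IH: "P \<in> carrier F \<and> [Th P = 1] (mod M) \<and> [C P = (\<Sum>j<m. C (comm F (x (2*j+3)) (x (2*j+4))))] (mod M)"
    using Suc unfolding P_def by simp
  have xm: "x (2*m+3) \<in> carrier F" "x (2*m+4) \<in> carrier F" using Suc.prems by auto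
  have Kc: "K \<in> carrier F" unfolding K_def using xm by (rule comm_closed)
  have thK: "[Th K = 1] (mod M)" unfolding K_def using xm by (rule Th_comm)
  have eq: "comm_prod F x (Suc m) = P \<otimes> K" unfolding P_def K_def by simp
  have "[Th (P \<otimes> K) = Th P * Th K] (mod M)" using IH Kc by (simp add: Th_mult)
  also have "[Th P * Th K = 1 * 1] (mod M)" using IH thK by (intro cong_mult) auto
  finally have t: "[Th (P \<otimes> K) = 1] (mod M)" by simp
  have "[C (P \<otimes> K) = C P + Th P * C K] (mod M)" using IH Kc by (simp add: C_mult)
  also have "[C P + Th P * C K = (\<Sum>j<m. C (comm F (x (2*j+3)) (x (2*j+4)))) + 1 * C K] (mod M)"
    using IH by (intro cong_add cong_mult cong_refl) auto
  finally have c: "[C (P \<otimes> K) = (\<Sum>j<Suc m. C (comm F (x (2*j+3)) (x (2*j+4))))] (mod M)"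
    by (simp add: K_def)
  show ?case using eq t c IH Kc by simp
qed

lemma r0_formula:
  assumes XX: "XX \<in> carrier F" and L: "L \<in> carrier F" and P: "P \<in> carrier F" and s: "s \<in> carrier F"
    and thL: "[Th L = 1] (mod M)" and thP: "[Th P = 1] (mod M)" and ths: "[Th s = 1] (mod M)"
    and cs: "[C s = 0] (mod M)"
    and thr: "[Th (XX \<otimes> L \<otimes> P \<otimes> s) = 1] (mod M)" and cr: "[C (XX \<otimes> L \<otimes> P \<otimes> s) = 0] (mod M)"
  shows "[C XX + C L + C P = 0] (mod M)"
proof -
  have "[Th XX = Th XX * 1 * 1 * 1] (mod M)" by simp
  also have "[Th XX * 1 * 1 * 1 = Th XX * Th L * Th P * Th s] (mod M)"
    using thL thP ths by (intro cong_mult cong_refl) (auto intro: cong_sym)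
  also have "[Th XX * Th L * Th P * Th s = Th (XX \<otimes> L) * Th P * Th s] (mod M)"
    using Th_mult[OF XX L] by (intro cong_mult cong_refl) (rule cong_sym)
  also have "[Th (XX \<otimes> L) * Th P * Th s = Th (XX \<otimes> L \<otimes> P) * Th s] (mod M)"
    using Th_mult[of "XX \<otimes> L" P] XX L P by (intro cong_mult cong_refl) (auto intro: cong_sym)
  also have "[Th (XX \<otimes> L \<otimes> P) * Th s = Th (XX \<otimes> L \<otimes> P \<otimes> s)] (mod M)"
    using Th_mult[of "XX \<otimes> L \<otimes> P" s] XX L P s by (auto intro: cong_sym)
  also note thr
  finally have thX: "[Th XX = 1] (mod M)" .
  have thXL: "[Th (XX \<otimes> L) = 1] (mod M)"
  proof -
    have "[Th (XX \<otimes> L) = Th XX * Th L] (mod M)" using XX L by (rule Th_mult)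
    also have "[Th XX * Th L = 1 * 1] (mod M)" using thX thL by (rule cong_mult)
    finally show ?thesis by simp
  qed
  have "[C XX + C L + C P = C XX + 1 * C L + 1 * C P] (mod M)" by simp
  also have "[C XX + 1 * C L + 1 * C P = C XX + Th XX * C L + Th (XX \<otimes> L) * C P] (mod M)"
    using thX thXL by (intro cong_add cong_mult cong_refl) (auto intro: cong_sym)
  also have "[C XX + Th XX * C L + Th (XX \<otimes> L) * C P = C (XX \<otimes> L) + Th (XX \<otimes> L) * C P] (mod M)"
    using C_mult[OF XX L] by (intro cong_add cong_refl) (rule cong_sym)
  also have "[C (XX \<otimes> L) + Th (XX \<otimes> L) * C P = C (XX \<otimes> L \<otimes> P)] (mod M)"
    using C_mult[of "XX \<otimes> L" P] XX L P by (auto intro: cong_sym)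
  also have "[C (XX \<otimes> L \<otimes> P) = C (XX \<otimes> L \<otimes> P) + Th (XX \<otimes> L \<otimes> P) * 0] (mod M)" by simp
  also have "[C (XX \<otimes> L \<otimes> P) + Th (XX \<otimes> L \<otimes> P) * 0 = C (XX \<otimes> L \<otimes> P) + Th (XX \<otimes> L \<otimes> P) * C s] (mod M)"
    using cs by (intro cong_add cong_mult cong_refl) (rule cong_sym)
  also have "[C (XX \<otimes> L \<otimes> P) + Th (XX \<otimes> L \<otimes> P) * C s = C (XX \<otimes> L \<otimes> P \<otimes> s)] (mod M)"
    using C_mult[of "XX \<otimes> L \<otimes> P" s] XX L P s by (auto intro: cong_sym)
  also note cr
  finally show ?thesis .
qed

end

definition zmodp :: "nat \<Rightarrow> nat monoid" where
  "zmodp p = \<lparr>carrier = {..<p}, mult = (\<lambda>a b. (a + b) mod p), one = 0\<rparr>"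

lemma zmodp_simps: "carrier (zmodp p) = {..<p}" "mult (zmodp p) = (\<lambda>a b. (a + b) mod p)"
  "one (zmodp p) = 0"
  by (simp_all add: zmodp_def)

lemma zmodp_comm_group: "p > 0 \<Longrightarrow> comm_group (zmodp p)"
proof (rule comm_groupI)
  assume p: "p > 0"
  fix x y z
  assume xyz: "x \<in> carrier (zmodp p)" "y \<in> carrier (zmodp p)" "z \<in> carrier (zmodp p)"
  show "x \<otimes>\<^bsub>zmodp p\<^esub> y \<in> carrier (zmodp p)" using p by (simp add: zmodp_simps zmodp_simps)
  show "x \<otimes>\<^bsub>zmodp p\<^esub> y \<otimes>\<^bsub>zmodp p\<^esub> z = x \<otimes>\<^bsub>zmodp p\<^esub> (y \<otimes>\<^bsub>zmodp p\<^esub> z)"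
    by (simp add: zmodp_simps mod_add_left_eq mod_add_right_eq add.assoc)
  show "x \<otimes>\<^bsub>zmodp p\<^esub> y = y \<otimes>\<^bsub>zmodp p\<^esub> x" by (simp add: zmodp_simps add.commute)
  show "\<one>\<^bsub>zmodp p\<^esub> \<otimes>\<^bsub>zmodp p\<^esub> x = x" using xyz by (simp add: zmodp_simps zmodp_simps)
  show "\<exists>y\<in>carrier (zmodp p). y \<otimes>\<^bsub>zmodp p\<^esub> x = \<one>\<^bsub>zmodp p\<^esub>"
    using xyz p by (intro bexI[of _ "(p - x) mod p"]) (auto simp: zmodp_simps mod_add_left_eq)
next
  assume "p > 0" then show "\<one>\<^bsub>zmodp p\<^esub> \<in> carrier (zmodp p)" by (simp add: zmodp_simps zmodp_simps)
qed

lemma zmodp_pow: "p > 0 \<Longrightarrow> a < p \<Longrightarrow> a [^]\<^bsub>zmodp p\<^esub> (N::nat) = (N * a) mod p"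
proof (induction N)
  case 0 then show ?case by (simp add: zmodp_simps zmodp_simps)
next
  case (Suc N)
  then have "a [^]\<^bsub>zmodp p\<^esub> Suc N = ((N * a) mod p + a) mod p" by (simp add: zmodp_simps zmodp_simps)
  also have "\<dots> = (N * a + a) mod p" by (rule mod_add_left_eq)
  finally show ?case by (simp add: zmodp_simps add.commute)
qed

lemma (in comm_group) comm_triv: "x \<in> carrier G \<Longrightarrow> y \<in> carrier G \<Longrightarrow> inv x \<otimes> inv y \<otimes> x \<otimes> y = \<one>"
proof -
  assume xy: "x \<in> carrier G" "y \<in> carrier G"
  have "inv x \<otimes> inv y = inv (y \<otimes> x)" using xy by (simp add: inv_mult_group)
  also have "y \<otimes> x = x \<otimes> y" using xy by (simp add: m_comm)
  finally have "inv x \<otimes> inv y \<otimes> x \<otimes> y = inv (x \<otimes> y) \<otimes> (x \<otimes> y)" using xy by (simp add: m_assoc)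
  then show ?thesis using xy by simp
qed

lemma fiber_closed:
  assumes "\<forall>v. openin T {a \<in> topspace T. \<phi> a = v}"
  shows "closedin T {a \<in> topspace T. \<phi> a = v}"
proof -
  have "topspace T - {a \<in> topspace T. \<phi> a = v} = \<Union> ((\<lambda>w. {a \<in> topspace T. \<phi> a = w}) ` (-{v}))"
    by auto
  moreover have "openin T (\<Union> ((\<lambda>w. {a \<in> topspace T. \<phi> a = w}) ` (-{v})))"
    using assms by (intro openin_Union) auto
  ultimately show ?thesis unfolding closedin_def by auto
qed

lemma closed_derived_sub:
  assumes "group F" "subgroup K F" "closedin TF K" "\<forall>a\<in>S. \<forall>b\<in>S. comm F a b \<in> K"
  shows "closed_derived F TF S \<subseteq> K"
  unfolding closed_derived_def closed_gen_def
proof (rule closure_of_minimal[OF _ assms(3)])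
  show "generate F {comm F a b |a b. a \<in> S \<and> b \<in> S} \<subseteq> K"
    by (rule group.generate_subgroup_incl[OF assms(1) _ assms(2)]) (use assms(4) in blast)
qed

lemma closed_gen_sub: "closed_gen G T A \<subseteq> topspace T"
  by (simp add: closed_gen_def closure_of_subset_topspace)

lemma closed_derived_sub_top: "closed_derived G T A \<subseteq> topspace T"
  by (simp add: closed_derived_def closed_gen_sub)

lemma hom_kills:
  assumes F: "group F" and p: "p > 0"
    and h: "h \<in> cont_hom F TF (zmodp p) (discrete_topology {..<p})"
    and top: "topspace TF = carrier F"
  shows "closedin TF {a \<in> carrier F. h a = 0}" (is ?A)
    and "subgroup {a \<in> carrier F. h a = 0} F" (is ?B)
    and "\<And>a b. a \<in> carrier F \<Longrightarrow> b \<in> carrier F \<Longrightarrow> h (comm F a b) = 0"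
    and "\<And>S. S \<subseteq> carrier F \<Longrightarrow> closed_derived F TF S \<subseteq> {a \<in> carrier F. h a = 0}"
    and "\<And>g a. g \<in> carrier F \<Longrightarrow> a \<in> carrier F \<Longrightarrow> h a = 0 \<Longrightarrow> h (inv\<^bsub>F\<^esub> g \<otimes>\<^bsub>F\<^esub> a \<otimes>\<^bsub>F\<^esub> g) = 0"
    and "\<And>a N. a \<in> carrier F \<Longrightarrow> h (a [^]\<^bsub>F\<^esub> (N::nat)) = (N * h a) mod p"
proof -
  interpret H: comm_group "zmodp p" using zmodp_comm_group[OF p] .
  have hh: "h \<in> hom F (zmodp p)" and hc: "continuous_map TF (discrete_topology {..<p}) h"
    using h by (auto simp: cont_hom_def)
  interpret gh: group_hom F "zmodp p" h using F H.group_axioms hh by (simp add: group_hom_def group_hom_axioms_def)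
  have kerdef: "kernel F (zmodp p) h = {a \<in> carrier F. h a = 0}" by (simp add: kernel_def zmodp_simps)
  show ?A
  proof -
    have "closedin TF {a \<in> topspace TF. h a \<in> {0}}"
      using hc p by (intro closedin_continuous_map_preimage) (auto simp: zmodp_simps)
    then show ?thesis using top by simp
  qed
  show ?B using gh.subgroup_kernel kerdef by simp
  show hc0: "h (comm F a b) = 0" if "a \<in> carrier F" "b \<in> carrier F" for a b
  proof -
    have x: "h a \<in> carrier (zmodp p)" "h b \<in> carrier (zmodp p)" using that by (blast intro: gh.hom_closed)+
    have "h (comm F a b) = inv\<^bsub>zmodp p\<^esub> (h a) \<otimes>\<^bsub>zmodp p\<^esub> inv\<^bsub>zmodp p\<^esub> (h b) \<otimes>\<^bsub>zmodp p\<^esub> h a \<otimes>\<^bsub>zmodp p\<^esub> h b"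
      using that by (simp add: comm_def)
    also have "\<dots> = \<one>\<^bsub>zmodp p\<^esub>" using x by (rule H.comm_triv)
    also have "\<dots> = 0" by (simp add: zmodp_simps)
    finally show ?thesis .
  qed
  show "closed_derived F TF S \<subseteq> {a \<in> carrier F. h a = 0}" if S: "S \<subseteq> carrier F" for S
  proof (rule closed_derived_sub[OF F \<open>?B\<close> \<open>?A\<close>])
    show "\<forall>a\<in>S. \<forall>b\<in>S. comm F a b \<in> {a \<in> carrier F. h a = 0}"
    proof (intro ballI)
      fix a b assume "a \<in> S" "b \<in> S"
      then have ab: "a \<in> carrier F" "b \<in> carrier F" using S by auto
      interpret Fg: group F by (rule F)
      have "comm F a b \<in> carrier F" using ab by (simp add: comm_def)
      then show "comm F a b \<in> {a \<in> carrier F. h a = 0}" using hc0[OF ab] by simp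
    qed
  qed
  show "h (inv\<^bsub>F\<^esub> g \<otimes>\<^bsub>F\<^esub> a \<otimes>\<^bsub>F\<^esub> g) = 0" if "g \<in> carrier F" "a \<in> carrier F" "h a = 0" for g a
  proof -
    have hg: "h g \<in> carrier (zmodp p)" using that by (blast intro: gh.hom_closed)
    have "h (inv\<^bsub>F\<^esub> g \<otimes>\<^bsub>F\<^esub> a \<otimes>\<^bsub>F\<^esub> g) = h (inv\<^bsub>F\<^esub> g \<otimes>\<^bsub>F\<^esub> a) \<otimes>\<^bsub>zmodp p\<^esub> h g"
      by (rule gh.hom_mult) (use that F in auto)
    also have "h (inv\<^bsub>F\<^esub> g \<otimes>\<^bsub>F\<^esub> a) = h (inv\<^bsub>F\<^esub> g) \<otimes>\<^bsub>zmodp p\<^esub> h a"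
      by (rule gh.hom_mult) (use that F in auto)
    also have "h (inv\<^bsub>F\<^esub> g) = inv\<^bsub>zmodp p\<^esub> (h g)" by (rule gh.hom_inv) (use that in auto)
    also have "h a = \<one>\<^bsub>zmodp p\<^esub>" using that by (simp add: zmodp_simps)
    also have "inv\<^bsub>zmodp p\<^esub> (h g) \<otimes>\<^bsub>zmodp p\<^esub> \<one>\<^bsub>zmodp p\<^esub> \<otimes>\<^bsub>zmodp p\<^esub> h g = \<one>\<^bsub>zmodp p\<^esub>"
      using hg by simp
    finally show ?thesis by (simp add: zmodp_simps)
  qed
  show "h (a [^]\<^bsub>F\<^esub> (N::nat)) = (N * h a) mod p" if "a \<in> carrier F" for a N
  proof -
    have hc: "h a \<in> carrier (zmodp p)" using that by (blast intro: gh.hom_closed)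
    have "h (a [^]\<^bsub>F\<^esub> N) = h a [^]\<^bsub>zmodp p\<^esub> N" by (rule gh.hom_nat_pow[OF that])
    also have "\<dots> = (N * h a) mod p" by (rule zmodp_pow[OF p]) (use hc in \<open>simp add: zmodp_simps\<close>)
    finally show ?thesis .
  qed
qed

lemma descent:
  assumes p: "Factorial_Ring.prime p"
    and F: "group F" and G: "group G" and topF: "topspace TF = carrier F" and topG: "topspace TG = carrier G"
    and cF: "compact_space TF" and hG: "Hausdorff_space TG"
    and pih: "\<pi> \<in> hom F G" and pic: "continuous_map TF TG \<pi>" and surj: "\<pi> ` carrier F = carrier G"
    and h: "h \<in> cont_hom F TF (zmodp p) (discrete_topology {..<p})"
    and ker: "\<And>a. a \<in> carrier F \<Longrightarrow> \<pi> a = \<one>\<^bsub>G\<^esub> \<Longrightarrow> h a = 0"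
    and th1: "\<And>g. g \<in> carrier G \<Longrightarrow> \<theta> g 1 = 1"
  shows "\<exists>c1. cocycle p G TG \<theta> 1 c1 \<and> (\<forall>a\<in>carrier F. c1 (\<pi> a) = int (h a))"
proof -
  have p0: "p > 0" using p prime_gt_0_nat by blast
  interpret H: comm_group "zmodp p" using zmodp_comm_group[OF p0] .
  have hh: "h \<in> hom F (zmodp p)" and hc: "continuous_map TF (discrete_topology {..<p}) h"
    using h by (auto simp: cont_hom_def)
  interpret gh: group_hom F "zmodp p" h using F H.group_axioms hh by (simp add: group_hom_def group_hom_axioms_def)
  interpret pg: group_hom F G \<pi> using F G pih by (simp add: group_hom_def group_hom_axioms_def)
  define pre where "pre g = (SOME a. a \<in> carrier F \<and> \<pi> a = g)" for g
  have pre: "pre g \<in> carrier F \<and> \<pi> (pre g) = g" if "g \<in> carrier G" for g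
  proof -
    have "g \<in> \<pi> ` carrier F" using that surj by simp
    then obtain a where a: "a \<in> carrier F" "\<pi> a = g" by (rule imageE) auto
    show ?thesis unfolding pre_def by (rule someI[of _ a]) (use a in simp)
  qed
  define c1 where "c1 g = int (h (pre g))" for g
  have hcar: "h a \<in> carrier (zmodp p)" if "a \<in> carrier F" for a
    using that by (blast intro: gh.hom_closed)
  have hlt: "h a < p" if "a \<in> carrier F" for a
    using hcar[OF that] by (simp add: zmodp_simps)
  have well: "h (pre (\<pi> a)) = h a" if a: "a \<in> carrier F" for a
  proof -
    define a' where "a' = pre (\<pi> a)"
    have a': "a' \<in> carrier F" "\<pi> a' = \<pi> a" using pre[of "\<pi> a"] a unfolding a'_def by auto
    have "\<pi> (inv\<^bsub>F\<^esub> a' \<otimes>\<^bsub>F\<^esub> a) = \<one>\<^bsub>G\<^esub>" using a a' by simp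
    then have "h (inv\<^bsub>F\<^esub> a' \<otimes>\<^bsub>F\<^esub> a) = \<one>\<^bsub>zmodp p\<^esub>" using ker a a' by (simp add: zmodp_simps)
    then have "\<one>\<^bsub>zmodp p\<^esub> = inv\<^bsub>zmodp p\<^esub> (h a') \<otimes>\<^bsub>zmodp p\<^esub> h a" using a a' by simp
    then have "h a = h a' \<otimes>\<^bsub>zmodp p\<^esub> \<one>\<^bsub>zmodp p\<^esub>"
      using H.inv_solve_left[OF H.one_closed hcar[OF a'(1)] hcar[OF a]] by simp
    then show ?thesis using hcar[OF a'(1)] unfolding a'_def by simp
  qed
  have c1pi: "c1 (\<pi> a) = int (h a)" if "a \<in> carrier F" for a
    unfolding c1_def using well[OF that] by simp
  have part1: "\<forall>g\<in>carrier G. 0 \<le> c1 g \<and> c1 g < int p ^ 1"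
    unfolding c1_def using hlt pre by auto
  have part2: "openin TG {g \<in> carrier G. c1 g = v}" for v
  proof -
    define U where "U = {a \<in> carrier F. int (h a) = v}"
    have "openin TF {a \<in> topspace TF. h a \<in> {n \<in> {..<p}. int n = v}}"
      by (rule openin_continuous_map_preimage[OF hc]) auto
    moreover have "{a \<in> topspace TF. h a \<in> {n \<in> {..<p}. int n = v}} = U"
      unfolding U_def topF using hlt by auto
    ultimately have Uo: "openin TF U" by simp
    have "closedin TF (topspace TF - U)" using Uo by (intro closedin_diff) auto
    then have "compactin TF (carrier F - U)" using closedin_compact_space[OF cF] topF by simp
    then have "compactin TG (\<pi> ` (carrier F - U))" using pic by (rule image_compactin)
    then have cl: "closedin TG (\<pi> ` (carrier F - U))" using hG by (intro compactin_imp_closedin)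
    have eq: "{g \<in> carrier G. c1 g = v} = topspace TG - \<pi> ` (carrier F - U)"
    proof
      show "{g \<in> carrier G. c1 g = v} \<subseteq> topspace TG - \<pi> ` (carrier F - U)"
        using c1pi topG unfolding U_def by auto
      show "topspace TG - \<pi> ` (carrier F - U) \<subseteq> {g \<in> carrier G. c1 g = v}"
      proof
        fix g assume g: "g \<in> topspace TG - \<pi> ` (carrier F - U)"
        then have gG: "g \<in> carrier G" using topG by auto
        have "pre g \<in> U"
        proof (rule ccontr)
          assume "pre g \<notin> U"
          then have "pre g \<in> carrier F - U" using pre[OF gG] by auto
          then have "\<pi> (pre g) \<in> \<pi> ` (carrier F - U)" by (rule imageI)
          then show False using g pre[OF gG] by auto
        qed
        then show "g \<in> {g \<in> carrier G. c1 g = v}" using gG unfolding U_def c1_def by auto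
      qed
    qed
    show ?thesis unfolding eq using cl by (intro openin_diff) auto
  qed
  have part3: "c1 (g \<otimes>\<^bsub>G\<^esub> g') = (c1 g + \<theta> g 1 * c1 g') mod int p ^ 1"
    if g: "g \<in> carrier G" "g' \<in> carrier G" for g g'
  proof -
    obtain a b where ab: "a \<in> carrier F" "b \<in> carrier F" "g = \<pi> a" "g' = \<pi> b"
      using pre g by metis
    have "c1 (g \<otimes>\<^bsub>G\<^esub> g') = c1 (\<pi> (a \<otimes>\<^bsub>F\<^esub> b))" using ab by simp
    also have "\<dots> = int (h (a \<otimes>\<^bsub>F\<^esub> b))" using ab by (intro c1pi) simp
    also have "\<dots> = int ((h a + h b) mod p)" using ab by (simp add: zmodp_simps)
    also have "\<dots> = (int (h a) + int (h b)) mod int p" by (simp add: zmod_int)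
    also have "\<dots> = (c1 g + \<theta> g 1 * c1 g') mod int p ^ 1" using ab th1 g c1pi by simp
    finally show ?thesis .
  qed
  have "cocycle p G TG \<theta> 1 c1" unfolding cocycle_def using part1 part2 part3 by blast
  then show ?thesis using c1pi by blast
qed

definition Sqf :: "nat \<Rightarrow> enat \<Rightarrow> int \<Rightarrow> int" where
  "Sqf p f l = (case f of enat m \<Rightarrow> (\<Sum>i<p^m. l^i) | \<infinity> \<Rightarrow> 0)"

definition alphaf :: "int \<Rightarrow> nat \<Rightarrow> enat \<Rightarrow> nat \<Rightarrow> (nat \<Rightarrow> int) \<Rightarrow> nat \<Rightarrow> int" where
  "alphaf M p f n lam i =
    (if i = 1 then Sqf p f (lam 1) + muinv M (lam 1) * (muinv M (lam 2) - 1) ^ n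
     else if i = 2 then muinv M (lam 1) * muinv M (lam 2) * (lam 1 - 1) * (muinv M (lam 2) - 1) ^ (n - 1)
     else if odd i then - (muinv M (lam i) * muinv M (lam (i + 1)) * (lam (i + 1) - 1))
     else muinv M (lam (i - 1)) * muinv M (lam i) * (lam (i - 1) - 1))"

lemma sum_pairs: "(\<Sum>i\<in>{3..2*m+2}. g i) = (\<Sum>j<m. g (2*j+3) + g (2*j+4))" for g :: "nat \<Rightarrow> int"
proof (induction m)
  case 0 then show ?case by simp
next
  case (Suc m)
  have "{3..2 * Suc m + 2} = insert (2*m+4) (insert (2*m+3) {3..2*m+2})" by auto
  then have "(\<Sum>i\<in>{3..2 * Suc m + 2}. g i) = g (2*m+4) + (g (2*m+3) + (\<Sum>i\<in>{3..2*m+2}. g i))"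
    by simp
  then show ?case using Suc by simp
qed

lemma sum_1d: "d \<ge> 2 \<Longrightarrow> (\<Sum>i\<in>{1..d}. g i) = g 1 + g 2 + (\<Sum>i\<in>{3..d}. g i)" for g :: "nat \<Rightarrow> int"
proof -
  assume "d \<ge> 2"
  then have "{1..d} = insert 1 (insert 2 {3..d})" by auto
  then show ?thesis by simp
qed

locale P38 =
  fixes p d \<nu> n :: nat and f :: enat
    and F :: "('f, 'b) monoid_scheme" and TF :: "'f topology" and x :: "nat \<Rightarrow> 'f"
    and r :: "nat \<Rightarrow> 'f" and s :: 'f
    and G :: "('g, 'c) monoid_scheme" and TG :: "'g topology" and \<pi> :: "'f \<Rightarrow> 'g"
  assumes prime: "Factorial_Ring.prime p" and deven: "even d" and d4: "d \<ge> 4" and n2: "n \<ge> 2"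
    and f1: "f \<ge> 1" and f2: "p = 2 \<longrightarrow> f \<ge> 2"
    and free: "free_pro_p p F TF d x"
    and s_in: "s \<in> closed_derived F TF (closed_derived F TF (closed_gen F TF (x ` {3..d})))"
    and r0: "r 0 = qpow F p f (x 1) \<otimes>\<^bsub>F\<^esub> lcomm F (x 1) (x 2) n
                   \<otimes>\<^bsub>F\<^esub> comm_prod F x (d div 2 - 1) \<otimes>\<^bsub>F\<^esub> s"
    and rj: "\<forall>j\<in>{1..\<nu>}. r j \<in> closed_derived F TF (closed_gen F TF (x ` {3..d}))"
    and Gpro: "pro_p_group p G TG"
    and pi_hom: "\<pi> \<in> cont_hom F TF G TG" and pi_surj: "\<pi> ` carrier F = carrier G"
    and pi_ker: "{a \<in> carrier F. \<pi> a = \<one>\<^bsub>G\<^esub>} = closed_normal_gen F TF (r ` {0..\<nu>})"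
begin

lemma p0: "p > 0" using prime prime_gt_0_nat by blast
lemma p2: "p \<ge> 2" using prime prime_ge_2_nat by blast

lemma Fpro: "pro_p_group p F TF" using free unfolding free_pro_p_def by (elim conjE)

lemma Fgroup: "group F" using Fpro unfolding pro_p_group_def topgroup_def by (elim conjE)
lemma topF: "topspace TF = carrier F" using Fpro unfolding pro_p_group_def topgroup_def by (elim conjE)
lemma cF: "compact_space TF" using Fpro unfolding pro_p_group_def topgroup_def by (elim conjE)

lemma Ggroup: "group G" using Gpro unfolding pro_p_group_def topgroup_def by (elim conjE)
lemma topG: "topspace TG = carrier G" using Gpro unfolding pro_p_group_def topgroup_def by (elim conjE)
lemma hG: "Hausdorff_space TG" using Gpro unfolding pro_p_group_def topgroup_def by (elim conjE)

lemma pih: "\<pi> \<in> hom F G" and pic: "continuous_map TF TG \<pi>"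
  using pi_hom unfolding cont_hom_def by auto

lemma xc_all: "\<forall>i\<in>{1..d}. x i \<in> carrier F"
  using free unfolding free_pro_p_def by (elim conjE)

lemma xc: "i \<in> {1..d} \<Longrightarrow> x i \<in> carrier F"
  using xc_all by blast

sublocale Fg: group F by (rule Fgroup)
sublocale Gg: group G by (rule Ggroup)
sublocale pg: group_hom F G \<pi> using Fgroup Ggroup pih by (simp add: group_hom_def group_hom_axioms_def)

definition m0 where "m0 = d div 2 - 1"
lemma d_eq: "d = 2 * m0 + 2" using deven d4 unfolding m0_def by (auto elim!: evenE)

definition XX where "XX = qpow F p f (x 1)"
definition LL where "LL = lcomm F (x 1) (x 2) n"
definition PP where "PP = comm_prod F x m0"

lemma r0_eq: "r 0 = XX \<otimes>\<^bsub>F\<^esub> LL \<otimes>\<^bsub>F\<^esub> PP \<otimes>\<^bsub>F\<^esub> s"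
  using r0 unfolding XX_def LL_def PP_def m0_def .

lemma x1c: "x 1 \<in> carrier F" and x2c: "x 2 \<in> carrier F" using xc d4 by auto

lemma xpair: "\<forall>j<m0. x (2*j+3) \<in> carrier F \<and> x (2*j+4) \<in> carrier F"
  using xc d_eq by auto

lemma lcomm_c: "lcomm F a b k \<in> carrier F" if "a \<in> carrier F" "b \<in> carrier F" for a b k
  using that by (induction k) (simp_all add: comm_def)

lemma comm_prod_c: "comm_prod F x k \<in> carrier F" if "k \<le> m0" for k
  using that xpair by (induction k) (simp_all add: comm_def)

lemma XXc: "XX \<in> carrier F" unfolding XX_def qpow_def using x1c by (cases f) auto
lemma LLc: "LL \<in> carrier F" unfolding LL_def using x1c x2c by (rule lcomm_c)
lemma PPc: "PP \<in> carrier F" unfolding PP_def by (rule comm_prod_c) simp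
lemma sc: "s \<in> carrier F" using subsetD[OF closed_derived_sub_top s_in] topF by simp
lemma r0c: "r 0 \<in> carrier F" using XXc LLc PPc sc r0_eq by simp
lemma rjc: "j \<in> {0..\<nu>} \<Longrightarrow> r j \<in> carrier F"
proof (cases "j = 0")
  case True then show ?thesis using r0c by simp
next
  case False
  assume "j \<in> {0..\<nu>}"
  with False have "j \<in> {1..\<nu>}" by auto
  then have "r j \<in> closed_derived F TF (closed_gen F TF (x ` {3..d}))" using rj by blast
  then show ?thesis using subsetD[OF closed_derived_sub_top] topF by metis
qed

lemma pi_r0: "\<pi> (r 0) = \<one>\<^bsub>G\<^esub>"
proof -
  define A where "A = {inv\<^bsub>F\<^esub> g \<otimes>\<^bsub>F\<^esub> a \<otimes>\<^bsub>F\<^esub> g | g a. g \<in> carrier F \<and> a \<in> r ` {0..\<nu>}}"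
  have A: "A \<subseteq> carrier F" unfolding A_def using rjc by auto
  have "r 0 \<in> A" unfolding A_def using r0c by (intro CollectI exI[of _ "\<one>\<^bsub>F\<^esub>"] exI[of _ "r 0"]) auto
  then have "r 0 \<in> generate F A" by (rule generate.incl)
  moreover have "generate F A \<subseteq> topspace TF" using Fg.generate_incl[OF A] topF by simp
  ultimately have "r 0 \<in> closed_normal_gen F TF (r ` {0..\<nu>})"
    unfolding closed_normal_gen_def closed_gen_def A_def[symmetric] using closure_of_subset by blast
  then have "r 0 \<in> {a \<in> carrier F. \<pi> a = \<one>\<^bsub>G\<^esub>}" by (simp only: pi_ker)
  then show ?thesis by simp
qed

lemma S3c: "closed_gen F TF (x ` {3..d}) \<subseteq> carrier F"
  using closed_gen_sub topF by metis

lemma S3dc: "closed_derived F TF (closed_gen F TF (x ` {3..d})) \<subseteq> carrier F"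
  using closed_derived_sub_top topF by metis

lemma kills:
  assumes h: "h \<in> cont_hom F TF (zmodp p) (discrete_topology {..<p})"
  shows "\<forall>j\<in>{0..\<nu>}. h (r j) = 0"
proof -
  define Ker where "Ker = {a \<in> carrier F. h a = 0}"
  note hk = hom_kills[OF Fgroup p0 h topF, folded Ker_def]
  interpret K: subgroup Ker F by (rule hk(2))
  have rj_in: "r j \<in> Ker" if "j \<in> {1..\<nu>}" for j
    using rj that hk(4)[OF S3c] by blast
  have s_in': "s \<in> Ker" using s_in hk(4)[OF S3dc] by blast
  have XX_in: "XX \<in> Ker"
  proof (cases f)
    case (enat m)
    then have m1: "m \<ge> 1" using f1 by (simp add: one_enat_def)
    have "h (x 1 [^]\<^bsub>F\<^esub> (p ^ m)) = (p ^ m * h (x 1)) mod p" by (rule hk(6)[OF x1c])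
    also have "\<dots> = 0" using m1 by (simp add: power_eq_if)
    finally show ?thesis unfolding XX_def qpow_def Ker_def using enat x1c by simp
  next
    case infinity
    then show ?thesis unfolding XX_def qpow_def by simp
  qed
  have LL_in: "LL \<in> Ker"
  proof -
    obtain n' where n': "n = Suc n'" using n2 by (cases n) auto
    have "LL = comm F (lcomm F (x 1) (x 2) n') (x 2)" unfolding LL_def by (simp add: n')
    moreover have "h (comm F (lcomm F (x 1) (x 2) n') (x 2)) = 0"
      using hk(3)[OF lcomm_c[OF x1c x2c] x2c] .
    ultimately show ?thesis unfolding Ker_def using LLc by simp
  qed
  have PP_in: "comm_prod F x k \<in> Ker" if "k \<le> m0" for k
    using that
  proof (induction k)
    case 0 then show ?case by simp
  next
    case (Suc k)
    have "x (2*k+3) \<in> carrier F" "x (2*k+4) \<in> carrier F" using xpair Suc.prems by auto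
    then have "comm F (x (2*k+3)) (x (2*k+4)) \<in> Ker"
      unfolding Ker_def using hk(3) by (simp add: comm_def)
    then show ?case using Suc by simp
  qed
  have "r 0 \<in> Ker" unfolding r0_eq using XX_in LL_in PP_in[of m0] s_in' unfolding PP_def by simp
  then have r0k: "h (r 0) = 0" unfolding Ker_def by simp
  show ?thesis
  proof
    fix j assume j: "j \<in> {0..\<nu>}"
    show "h (r j) = 0"
    proof (cases "j = 0")
      case True then show ?thesis using r0k by simp
    next
      case False then have "j \<in> {1..\<nu>}" using j by auto
      then show ?thesis using rj_in unfolding Ker_def by blast
    qed
  qed
qed

lemma ker_sub:
  assumes h: "h \<in> cont_hom F TF (zmodp p) (discrete_topology {..<p})"
    and a: "a \<in> carrier F" "\<pi> a = \<one>\<^bsub>G\<^esub>"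
  shows "h a = 0"
proof -
  define Ker where "Ker = {a \<in> carrier F. h a = 0}"
  note hk = hom_kills[OF Fgroup p0 h topF, folded Ker_def]
  have kr: "\<forall>j\<in>{0..\<nu>}. h (r j) = 0" by (rule kills[OF h])
  have "{inv\<^bsub>F\<^esub> g \<otimes>\<^bsub>F\<^esub> b \<otimes>\<^bsub>F\<^esub> g | g b. g \<in> carrier F \<and> b \<in> r ` {0..\<nu>}} \<subseteq> Ker"
  proof
    fix z assume "z \<in> {inv\<^bsub>F\<^esub> g \<otimes>\<^bsub>F\<^esub> b \<otimes>\<^bsub>F\<^esub> g | g b. g \<in> carrier F \<and> b \<in> r ` {0..\<nu>}}"
    then obtain g j where gj: "g \<in> carrier F" "j \<in> {0..\<nu>}" "z = inv\<^bsub>F\<^esub> g \<otimes>\<^bsub>F\<^esub> r j \<otimes>\<^bsub>F\<^esub> g"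
      by blast
    have "h z = 0" using hk(5)[OF gj(1) rjc[OF gj(2)]] kr gj by simp
    moreover have "z \<in> carrier F" using gj rjc by simp
    ultimately show "z \<in> Ker" unfolding Ker_def by simp
  qed
  then have "generate F {inv\<^bsub>F\<^esub> g \<otimes>\<^bsub>F\<^esub> b \<otimes>\<^bsub>F\<^esub> g | g b. g \<in> carrier F \<and> b \<in> r ` {0..\<nu>}} \<subseteq> Ker"
    by (rule Fg.generate_subgroup_incl[OF _ hk(2)])
  then have "closed_normal_gen F TF (r ` {0..\<nu>}) \<subseteq> Ker"
    unfolding closed_normal_gen_def closed_gen_def by (rule closure_of_minimal[OF _ hk(1)])
  moreover have "a \<in> closed_normal_gen F TF (r ` {0..\<nu>})" using a pi_ker by blast
  ultimately show ?thesis unfolding Ker_def by blast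
qed

lemma orient_1: "orientation p G TG \<theta> \<Longrightarrow> g \<in> carrier G \<Longrightarrow> \<theta> g 1 = 1"
  unfolding orientation_def using p2 by auto

lemma cocycle_exists:
  assumes or: "orientation p G TG \<theta>" and ku: "kummerian p G TG \<theta>" and k: "k \<ge> 1"
    and i0: "i0 \<in> {1..d}"
  shows "\<exists>c. cocycle p G TG \<theta> k c \<and> (\<forall>i\<in>{1..d}. [c (\<pi> (x i)) = (if i = i0 then 1 else 0)] (mod int p))"
proof -
  define y where "y i = (if i = i0 then 1 else (0::nat))" for i
  have Hg: "group (zmodp p)" using zmodp_comm_group[OF p0] comm_group.axioms(2) by blast
  have Hf: "finite (carrier (zmodp p))" by (simp add: zmodp_simps)
  have Hc: "\<exists>m. card (carrier (zmodp p)) = p ^ m" by (intro exI[of _ 1]) (simp add: zmodp_simps)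
  have Hy: "\<forall>i\<in>{1..d}. y i \<in> carrier (zmodp p)" using p2 by (simp add: zmodp_simps y_def)
  have univ: "\<forall>(H :: nat monoid) y. group H \<and> finite (carrier H) \<and> (\<exists>m. card (carrier H) = p ^ m)
          \<and> (\<forall>i\<in>{1..d}. y i \<in> carrier H) \<longrightarrow>
          (\<exists>!h. h \<in> cont_hom F TF H (discrete_topology (carrier H)) \<and> h \<in> extensional (carrier F)
                \<and> (\<forall>i\<in>{1..d}. h (x i) = y i))"
    using free unfolding free_pro_p_def by (elim conjE)
  then have "\<exists>!h. h \<in> cont_hom F TF (zmodp p) (discrete_topology (carrier (zmodp p))) \<and> h \<in> extensional (carrier F)
                \<and> (\<forall>i\<in>{1..d}. h (x i) = y i)"
    using Hg Hf Hc Hy by blast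
  then obtain h where h: "h \<in> cont_hom F TF (zmodp p) (discrete_topology {..<p})"
    and hx: "\<forall>i\<in>{1..d}. h (x i) = y i"
    by (auto simp: zmodp_simps)
  obtain c1 where c1: "cocycle p G TG \<theta> 1 c1" and c1pi: "\<forall>a\<in>carrier F. c1 (\<pi> a) = int (h a)"
    using descent[where p=p and F=F and G=G and TF=TF and TG=TG and \<pi>=\<pi> and h=h and \<theta>=\<theta>, OF prime Fgroup Ggroup topF topG cF hG pih pic pi_surj h ker_sub[OF h] orient_1[OF or]]
    by blast
  obtain c b where c: "cocycle p G TG \<theta> k c" and b: "coboundary p G \<theta> 1 b"
    and cb: "\<forall>g\<in>carrier G. c g mod int p = (c1 g + b g) mod int p"
    using ku k c1 unfolding kummerian_def by blast
  obtain m where bm: "\<forall>g\<in>carrier G. b g = ((\<theta> g 1 - 1) * m) mod int p ^ 1"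
    using b unfolding coboundary_def by blast
  have "[c (\<pi> (x i)) = (if i = i0 then 1 else 0)] (mod int p)" if i: "i \<in> {1..d}" for i
  proof -
    have xi: "x i \<in> carrier F" using xc[OF i] .
    then have g: "\<pi> (x i) \<in> carrier G" by simp
    have "c (\<pi> (x i)) mod int p = (c1 (\<pi> (x i)) + b (\<pi> (x i))) mod int p" using cb g by blast
    also have "b (\<pi> (x i)) = 0" using bm g orient_1[OF or g] by simp
    also have "c1 (\<pi> (x i)) = int (y i)" using c1pi xi hx i by simp
    finally have "c (\<pi> (x i)) mod int p = int (y i) mod int p" by simp
    then show ?thesis unfolding cong_def y_def by (simp split: if_splits)
  qed
  then show ?thesis using c by blast
qed

lemma relation:
  assumes or: "orientation p G TG \<theta>" and k: "k \<ge> 1" and c: "cocycle p G TG \<theta> k c"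
  shows "[(\<Sum>i\<in>{1..d}. alphaf (int p ^ k) p f n (\<lambda>i. \<theta> (\<pi> (x i)) k) i * c (\<pi> (x i))) = 0] (mod int p ^ k)"
proof -
  define M where "M = int p ^ k"
  define Th where "Th a = \<theta> (\<pi> a) k" for a
  define C where "C a = c (\<pi> a)" for a
  have M1: "M > 1"
  proof -
    have "int p ^ 1 \<le> int p ^ k" by (rule power_increasing) (use k p0 in auto)
    then have "int p \<le> int p ^ k" by simp
    then show ?thesis unfolding M_def using p2 by linarith
  qed
  have thZ: "\<theta> g \<in> Zp p" if "g \<in> carrier G" for g using or that unfolding orientation_def by blast
  have thmul: "\<theta> (g \<otimes>\<^bsub>G\<^esub> g') = zp_mult p (\<theta> g) (\<theta> g')" if "g \<in> carrier G" "g' \<in> carrier G" for g g'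
    using or that unfolding orientation_def by blast
  have thop: "openin TG {g \<in> carrier G. \<theta> g k = v}" for v
    using or unfolding orientation_def by blast
  have crange: "0 \<le> c g \<and> c g < int p ^ k" if "g \<in> carrier G" for g using c that unfolding cocycle_def by blast
  have cop: "openin TG {g \<in> carrier G. c g = v}" for v using c unfolding cocycle_def by blast
  have cm: "c (g \<otimes>\<^bsub>G\<^esub> g') = (c g + \<theta> g k * c g') mod int p ^ k" if "g \<in> carrier G" "g' \<in> carrier G" for g g'
    using c that unfolding cocycle_def by blast
  have Thr: "0 \<le> Th a \<and> Th a < M" if "a \<in> carrier F" for a
    unfolding Th_def M_def using Zp_range[OF thZ] that by simp
  have Cr: "0 \<le> C a \<and> C a < M" if "a \<in> carrier F" for a
    unfolding C_def M_def using crange that by simp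
  interpret cc: cocyc F Th C M
  proof
    fix a b assume a: "a \<in> carrier F" and b: "b \<in> carrier F"
    show "coprime (Th a) M" unfolding Th_def M_def
      by (rule Zp_unit_coprime[OF prime thZ]) (use a or orient_1 in auto)
    show "[Th (a \<otimes>\<^bsub>F\<^esub> b) = Th a * Th b] (mod M)"
      unfolding Th_def M_def using a b thmul[of "\<pi> a" "\<pi> b"] by (simp add: zp_mult_def cong_def)
    show "[C (a \<otimes>\<^bsub>F\<^esub> b) = C a + Th a * C b] (mod M)"
      unfolding Th_def C_def M_def using a b cm[of "\<pi> a" "\<pi> b"] by (simp add: cong_def)
  qed
  have eqc: "[v = w] (mod M) \<Longrightarrow> 0 \<le> v \<Longrightarrow> v < M \<Longrightarrow> 0 \<le> w \<Longrightarrow> w < M \<Longrightarrow> v = w" for v w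
    by (simp add: cong_less_imp_eq_int)
  have Th_open: "\<forall>v. openin TF {a \<in> topspace TF. Th a = v}"
  proof
    fix v
    have "openin TF {a \<in> topspace TF. \<pi> a \<in> {g \<in> carrier G. \<theta> g k = v}}"
      by (rule openin_continuous_map_preimage[OF pic thop])
    moreover have "{a \<in> topspace TF. \<pi> a \<in> {g \<in> carrier G. \<theta> g k = v}} = {a \<in> topspace TF. Th a = v}"
      unfolding Th_def using topF by auto
    ultimately show "openin TF {a \<in> topspace TF. Th a = v}" by simp
  qed
  have C_open: "\<forall>v. openin TF {a \<in> topspace TF. C a = v}"
  proof
    fix v
    have "openin TF {a \<in> topspace TF. \<pi> a \<in> {g \<in> carrier G. c g = v}}"
      by (rule openin_continuous_map_preimage[OF pic cop])
    moreover have "{a \<in> topspace TF. \<pi> a \<in> {g \<in> carrier G. c g = v}} = {a \<in> topspace TF. C a = v}"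
      unfolding C_def using topF by auto
    ultimately show "openin TF {a \<in> topspace TF. C a = v}" by simp
  qed
  define A where "A = {a \<in> carrier F. Th a = 1}"
  define K where "K = {a \<in> carrier F. Th a = 1 \<and> C a = 0}"
  have Acl: "closedin TF A" unfolding A_def using fiber_closed[OF Th_open, of 1] topF by simp
  have Kcl: "closedin TF K"
  proof -
    have "K = {a \<in> topspace TF. Th a = 1} \<inter> {a \<in> topspace TF. C a = 0}" unfolding K_def using topF by auto
    then show ?thesis using fiber_closed[OF Th_open, of 1] fiber_closed[OF C_open, of 0] by (simp add: closedin_Int)
  qed
  have Th1: "Th \<one>\<^bsub>F\<^esub> = 1" using eqc[OF cc.Th_one] Thr[of "\<one>\<^bsub>F\<^esub>"] M1 by simp
  have C1: "C \<one>\<^bsub>F\<^esub> = 0" using eqc[OF cc.C_one] Cr[of "\<one>\<^bsub>F\<^esub>"] M1 by simp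
  have Asub: "subgroup A F"
  proof (rule Fg.subgroupI)
    show "A \<subseteq> carrier F" unfolding A_def by auto
    show "A \<noteq> {}" unfolding A_def using Th1 by auto
  next
    fix a assume a: "a \<in> A"
    then have ac: "a \<in> carrier F" and ta: "Th a = 1" unfolding A_def by auto
    have "[Th (inv\<^bsub>F\<^esub> a) * Th a = Th (inv\<^bsub>F\<^esub> a \<otimes>\<^bsub>F\<^esub> a)] (mod M)"
      using cc.Th_mult[of "inv\<^bsub>F\<^esub> a" a] ac by (simp add: cong_sym_eq)
    then have "[Th (inv\<^bsub>F\<^esub> a) = 1] (mod M)" using ac ta Th1 by simp
    then have "Th (inv\<^bsub>F\<^esub> a) = 1" by (rule eqc) (use Thr[of "inv\<^bsub>F\<^esub> a"] ac M1 in simp_all)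
    then show "inv\<^bsub>F\<^esub> a \<in> A" unfolding A_def using ac by simp
  next
    fix a b assume "a \<in> A" "b \<in> A"
    then have ab: "a \<in> carrier F" "b \<in> carrier F" "Th a = 1" "Th b = 1" unfolding A_def by auto
    have "[Th (a \<otimes>\<^bsub>F\<^esub> b) = 1] (mod M)" using cc.Th_mult[OF ab(1,2)] ab by simp
    then have "Th (a \<otimes>\<^bsub>F\<^esub> b) = 1" by (rule eqc) (use Thr[of "a \<otimes>\<^bsub>F\<^esub> b"] ab M1 in simp_all)
    then show "a \<otimes>\<^bsub>F\<^esub> b \<in> A" unfolding A_def using ab by simp
  qed
  have Ksub: "subgroup K F"
  proof (rule Fg.subgroupI)
    show "K \<subseteq> carrier F" unfolding K_def by auto
    show "K \<noteq> {}" unfolding K_def using Th1 C1 by auto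
  next
    fix a assume a: "a \<in> K"
    then have ac: "a \<in> carrier F" and ta: "Th a = 1" and ca: "C a = 0" unfolding K_def by auto
    have "[Th (inv\<^bsub>F\<^esub> a) * Th a = Th (inv\<^bsub>F\<^esub> a \<otimes>\<^bsub>F\<^esub> a)] (mod M)"
      using cc.Th_mult[of "inv\<^bsub>F\<^esub> a" a] ac by (simp add: cong_sym_eq)
    then have "[Th (inv\<^bsub>F\<^esub> a) = 1] (mod M)" using ac ta Th1 by simp
    then have t: "Th (inv\<^bsub>F\<^esub> a) = 1" by (rule eqc) (use Thr[of "inv\<^bsub>F\<^esub> a"] ac M1 in simp_all)
    have "[C (inv\<^bsub>F\<^esub> a) + Th (inv\<^bsub>F\<^esub> a) * C a = C (inv\<^bsub>F\<^esub> a \<otimes>\<^bsub>F\<^esub> a)] (mod M)"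
      using cc.C_mult[of "inv\<^bsub>F\<^esub> a" a] ac by (simp add: cong_sym_eq)
    then have "[C (inv\<^bsub>F\<^esub> a) = 0] (mod M)" using ac ca C1 by simp
    then have "C (inv\<^bsub>F\<^esub> a) = 0" by (rule eqc) (use Cr[of "inv\<^bsub>F\<^esub> a"] ac M1 in simp_all)
    then show "inv\<^bsub>F\<^esub> a \<in> K" unfolding K_def using ac t by auto
  next
    fix a b assume "a \<in> K" "b \<in> K"
    then have ab: "a \<in> carrier F" "b \<in> carrier F" "Th a = 1" "Th b = 1" "C a = 0" "C b = 0"
      unfolding K_def by auto
    have "[Th (a \<otimes>\<^bsub>F\<^esub> b) = 1] (mod M)" using cc.Th_mult[OF ab(1,2)] ab by simp
    then have t: "Th (a \<otimes>\<^bsub>F\<^esub> b) = 1" by (rule eqc) (use Thr[of "a \<otimes>\<^bsub>F\<^esub> b"] ab M1 in simp_all)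
    have "[C (a \<otimes>\<^bsub>F\<^esub> b) = 0] (mod M)" using cc.C_mult[OF ab(1,2)] ab by simp
    then have "C (a \<otimes>\<^bsub>F\<^esub> b) = 0" by (rule eqc) (use Cr[of "a \<otimes>\<^bsub>F\<^esub> b"] ab M1 in simp_all)
    then show "a \<otimes>\<^bsub>F\<^esub> b \<in> K" unfolding K_def using ab t by auto
  qed
  have inner: "closed_derived F TF (closed_gen F TF (x ` {3..d})) \<subseteq> A"
  proof (rule closed_derived_sub[OF Fgroup Asub Acl], intro ballI)
    fix a b assume "a \<in> closed_gen F TF (x ` {3..d})" "b \<in> closed_gen F TF (x ` {3..d})"
    then have ab: "a \<in> carrier F" "b \<in> carrier F" using S3c by auto
    have cm: "comm F a b \<in> carrier F" using ab by (rule cc.comm_closed)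
    have "Th (comm F a b) = 1" using eqc[OF cc.Th_comm[OF ab]] Thr[OF cm] M1 by simp
    then show "comm F a b \<in> A" unfolding A_def using cm by simp
  qed
  have outer: "closed_derived F TF (closed_derived F TF (closed_gen F TF (x ` {3..d}))) \<subseteq> K"
  proof (rule closed_derived_sub[OF Fgroup Ksub Kcl], intro ballI)
    fix a b assume "a \<in> closed_derived F TF (closed_gen F TF (x ` {3..d}))"
      "b \<in> closed_derived F TF (closed_gen F TF (x ` {3..d}))"
    then have ab: "a \<in> carrier F" "b \<in> carrier F" "Th a = 1" "Th b = 1" using inner unfolding A_def by auto
    have cm: "comm F a b \<in> carrier F" using ab by (intro cc.comm_closed)
    have t: "Th (comm F a b) = 1" using eqc[OF cc.Th_comm[OF ab(1,2)]] Thr[OF cm] M1 by simp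
    have "[C (comm F a b) = 0] (mod M)" using cc.C_comm[OF ab(1,2)] ab by simp
    then have "C (comm F a b) = 0" by (rule eqc) (use Cr[OF cm] M1 in simp_all)
    then show "comm F a b \<in> K" unfolding K_def using cm t by simp
  qed
  have sK: "Th s = 1" "C s = 0" using s_in outer unfolding K_def by auto
  have Thr0: "Th (r 0) = 1" and Cr0: "C (r 0) = 0" using pi_r0 Th1 C1 unfolding Th_def C_def by simp_all
  obtain n' where n': "n = Suc n'" using n2 by (cases n) auto
  define lam where "lam i = \<theta> (\<pi> (x i)) k" for i
  define cv where "cv i = c (\<pi> (x i))" for i
  define mu where "mu i = muinv M (lam i)" for i
  have Thx: "Th (x i) = lam i" for i unfolding Th_def lam_def by simp
  have Cx: "C (x i) = cv i" for i unfolding C_def cv_def by simp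
  define Sq where "Sq = Sqf p f (lam 1)"
  have LLf: "[Th LL = 1] (mod M) \<and> [C LL = (mu 2 - 1) ^ n' * C (comm F (x 1) (x 2))] (mod M)"
  proof -
    have LLeq: "LL = lcomm F (x 1) (x 2) (Suc n')" unfolding LL_def by (simp add: n')
    show ?thesis using cc.lcomm[OF x1c x2c, of n'] unfolding LLeq[symmetric] mu_def Thx .
  qed
  have PPf: "PP \<in> carrier F \<and> [Th PP = 1] (mod M) \<and>
      [C PP = (\<Sum>j<m0. C (comm F (x (2*j+3)) (x (2*j+4))))] (mod M)"
    unfolding PP_def by (rule cc.comm_prod[OF xpair])
  have rel0: "[C XX + C LL + C PP = 0] (mod M)"
  proof (rule cc.r0_formula[OF XXc LLc PPc sc])
    show "[Th LL = 1] (mod M)" using LLf by blast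
    show "[Th PP = 1] (mod M)" using PPf by blast
    show "[Th s = 1] (mod M)" using sK by simp
    show "[C s = 0] (mod M)" using sK by simp
    show "[Th (XX \<otimes>\<^bsub>F\<^esub> LL \<otimes>\<^bsub>F\<^esub> PP \<otimes>\<^bsub>F\<^esub> s) = 1] (mod M)" using Thr0 r0_eq by simp
    show "[C (XX \<otimes>\<^bsub>F\<^esub> LL \<otimes>\<^bsub>F\<^esub> PP \<otimes>\<^bsub>F\<^esub> s) = 0] (mod M)" using Cr0 r0_eq by simp
  qed
  have CXX: "[C XX = cv 1 * Sq] (mod M)"
  proof (cases f)
    case (enat m)
    then have "XX = x 1 [^]\<^bsub>F\<^esub> (p ^ m)" unfolding XX_def qpow_def by simp
    moreover have "Sq = (\<Sum>i<p^m. lam 1 ^ i)" unfolding Sq_def Sqf_def enat by simp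
    ultimately show ?thesis using cc.C_pow[OF x1c, of "p ^ m"] unfolding Thx Cx by simp
  next
    case infinity
    then have "XX = \<one>\<^bsub>F\<^esub>" "Sq = 0" unfolding XX_def qpow_def Sq_def Sqf_def by simp_all
    then show ?thesis using C1 by simp
  qed
  have Ccomm: "[C (comm F (x a) (x b)) = mu a * mu b * ((lam a - 1) * cv b - (lam b - 1) * cv a)] (mod M)"
    if "x a \<in> carrier F" "x b \<in> carrier F" for a b
    using cc.C_comm[OF that] unfolding Thx Cx mu_def .
  define E where "E = cv 1 * Sq + (mu 2 - 1) ^ n' * (mu 1 * mu 2 * ((lam 1 - 1) * cv 2 - (lam 2 - 1) * cv 1))
     + (\<Sum>j<m0. mu (2*j+3) * mu (2*j+4) * ((lam (2*j+3) - 1) * cv (2*j+4) - (lam (2*j+4) - 1) * cv (2*j+3)))"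
  have CE: "[C XX + C LL + C PP = E] (mod M)"
  proof -
    have a1: "[C LL = (mu 2 - 1) ^ n' * (mu 1 * mu 2 * ((lam 1 - 1) * cv 2 - (lam 2 - 1) * cv 1))] (mod M)"
      using LLf Ccomm[OF x1c x2c] cong_trans cong_scalar_left by blast
    have a2: "[C PP = (\<Sum>j<m0. mu (2*j+3) * mu (2*j+4) * ((lam (2*j+3) - 1) * cv (2*j+4) - (lam (2*j+4) - 1) * cv (2*j+3)))] (mod M)"
    proof -
      have "[(\<Sum>j<m0. C (comm F (x (2*j+3)) (x (2*j+4)))) = (\<Sum>j<m0. mu (2*j+3) * mu (2*j+4) * ((lam (2*j+3) - 1) * cv (2*j+4) - (lam (2*j+4) - 1) * cv (2*j+3)))] (mod M)"
        using xpair by (intro cong_sum Ccomm) auto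
      then show ?thesis using PPf cong_trans by blast
    qed
    show ?thesis unfolding E_def using CXX a1 a2 by (intro cong_add)
  qed
  have E0: "[E = 0] (mod M)" using cong_trans[OF cong_sym[OF CE] rel0] .
  have lamdef: "(\<lambda>i. \<theta> (\<pi> (x i)) k) = lam" unfolding lam_def by simp
  define al where "al i = alphaf M p f n lam i" for i
  have sumeq: "(\<Sum>i\<in>{1..d}. al i * cv i) = (Sq + mu 1 * (mu 2 - 1) ^ n) * cv 1
      + mu 1 * mu 2 * (lam 1 - 1) * (mu 2 - 1) ^ n' * cv 2
      + (\<Sum>j<m0. mu (2*j+3) * mu (2*j+4) * ((lam (2*j+3) - 1) * cv (2*j+4) - (lam (2*j+4) - 1) * cv (2*j+3)))"
  proof -
    have "(\<Sum>i\<in>{1..d}. al i * cv i) = al 1 * cv 1 + al 2 * cv 2 + (\<Sum>i\<in>{3..d}. al i * cv i)"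
      using d4 by (intro sum_1d) simp
    also have "(\<Sum>i\<in>{3..d}. al i * cv i) = (\<Sum>j<m0. al (2*j+3) * cv (2*j+3) + al (2*j+4) * cv (2*j+4))"
      by (subst d_eq) (rule sum_pairs)
    also have "\<dots> = (\<Sum>j<m0. mu (2*j+3) * mu (2*j+4) * ((lam (2*j+3) - 1) * cv (2*j+4) - (lam (2*j+4) - 1) * cv (2*j+3)))"
      by (rule sum.cong) (simp_all add: al_def alphaf_def mu_def algebra_simps)
    also have "al 1 = Sq + mu 1 * (mu 2 - 1) ^ n" by (simp add: al_def alphaf_def mu_def Sq_def)
    also have "al 2 = mu 1 * mu 2 * (lam 1 - 1) * (mu 2 - 1) ^ n'" by (simp add: al_def alphaf_def mu_def n')
    finally show ?thesis .
  qed
  have "(\<Sum>i\<in>{1..d}. al i * cv i) - E = mu 1 * (mu 2 - 1) ^ n' * cv 1 * (lam 2 * mu 2 - 1)"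
    unfolding sumeq E_def n' by (simp add: algebra_simps)
  moreover have "[lam 2 * mu 2 = 1] (mod M)" unfolding mu_def
    using muinv cc.Th_cop[OF x2c] unfolding Thx by blast
  ultimately have "[(\<Sum>i\<in>{1..d}. al i * cv i) = E] (mod M)"
    by (simp add: cong_iff_dvd_diff)
  then have "[(\<Sum>i\<in>{1..d}. al i * cv i) = 0] (mod M)" using E0 by (rule cong_trans)
  then show ?thesis unfolding al_def cv_def lamdef M_def .

qed

lemma alpha_dvd:
  assumes or: "orientation p G TG \<theta>" and ku: "kummerian p G TG \<theta>" and k: "k \<ge> 1"
  shows "\<forall>i\<in>{1..d}. int p ^ k dvd alphaf (int p ^ k) p f n (\<lambda>i. \<theta> (\<pi> (x i)) k) i"
proof (rule lin_dvd)
  show "finite {1..d}" by simp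
  show "\<forall>i0\<in>{1..d}. \<exists>c. (\<forall>i\<in>{1..d}. [c i = (if i = i0 then 1 else 0)] (mod int p)) \<and>
      [(\<Sum>i\<in>{1..d}. alphaf (int p ^ k) p f n (\<lambda>i. \<theta> (\<pi> (x i)) k) i * c i) = 0] (mod int p ^ k)"
  proof
    fix i0 assume i0: "i0 \<in> {1..d}"
    obtain c where c: "cocycle p G TG \<theta> k c"
      and cc: "\<forall>i\<in>{1..d}. [c (\<pi> (x i)) = (if i = i0 then 1 else 0)] (mod int p)"
      using cocycle_exists[OF or ku k i0] by blast
    show "\<exists>c. (\<forall>i\<in>{1..d}. [c i = (if i = i0 then 1 else 0)] (mod int p)) \<and>
      [(\<Sum>i\<in>{1..d}. alphaf (int p ^ k) p f n (\<lambda>i. \<theta> (\<pi> (x i)) k) i * c i) = 0] (mod int p ^ k)"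
      using cc relation[OF or k c] by (intro exI[of _ "\<lambda>i. c (\<pi> (x i))"]) simp
  qed
qed

end

lemma cop_cancel: "coprime u (M::int) \<Longrightarrow> M dvd u * v \<Longrightarrow> M dvd v"
  by (metis coprime_commute coprime_dvd_mult_right_iff)

lemma Zp_zero: "a \<in> Zp p \<Longrightarrow> a 0 = 0"
  using Zp_range[of a p 0] by simp

lemma zp_one_0: "zp_one p 0 = 0" by (simp add: zp_one_def zp_of_int_def)

lemma pk_gt1: "k \<ge> 1 \<Longrightarrow> p \<ge> 2 \<Longrightarrow> int p ^ k > 1"
proof -
  assume k: "k \<ge> 1" and p: "p \<ge> 2"
  have "int p ^ 1 \<le> int p ^ k" by (rule power_increasing) (use k p in auto)
  then have "int p \<le> int p ^ k" by simp
  moreover have "int p \<ge> 2" using p by simp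
  ultimately show ?thesis by linarith
qed

lemma zp_one_k: "k \<ge> 1 \<Longrightarrow> p \<ge> 2 \<Longrightarrow> zp_one p k = 1"
  using pk_gt1[of k p] by (simp add: zp_one_def zp_of_int_def)

lemma Zp_eq_one:
  assumes "a \<in> Zp p" "p \<ge> 2" "k \<ge> 1" "[a k = 1] (mod int p ^ k)"
  shows "a k = zp_one p k"
proof -
  have M1: "int p ^ k > 1" using pk_gt1 assms by blast
  show ?thesis using assms(4) Zp_range[OF assms(1), of k] M1 zp_one_k[OF assms(3,2)]
    by (simp add: cong_def)
qed

definition qval :: "nat \<Rightarrow> enat \<Rightarrow> int" where
  "qval p f = (case f of enat m \<Rightarrow> int p ^ m | \<infinity> \<Rightarrow> 0)"

lemma zp_q_eq: "zp_q p f = zp_of_int p (qval p f)"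
  by (cases f) (simp_all add: zp_q_def qval_def)

lemma Sqf_1: "Sqf p f 1 = qval p f"
  by (cases f) (simp_all add: Sqf_def qval_def)

lemma zp_of_int_Zp: "p > 0 \<Longrightarrow> zp_of_int p q \<in> Zp p"
  unfolding Zp_def zp_of_int_def by (auto simp: mod_mod_cancel le_imp_power_dvd)

lemma zp_neg_of_int: "zp_neg p (zp_of_int p q) = zp_of_int p (- q)"
  unfolding zp_neg_def zp_of_int_def by (simp add: mod_minus_eq)

context P38
begin

lemma thZx:
  assumes or: "orientation p G TG \<theta>" and i: "i \<in> {1..d}"
  shows "\<theta> (\<pi> (x i)) \<in> Zp p" "\<theta> (\<pi> (x i)) 1 = 1"
proof -
  have g: "\<pi> (x i) \<in> carrier G" using xc[OF i] by simp
  show "\<theta> (\<pi> (x i)) \<in> Zp p" using or g unfolding orientation_def by blast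
  show "\<theta> (\<pi> (x i)) 1 = 1" using orient_1[OF or g] .
qed

lemma mu_cop:
  assumes or: "orientation p G TG \<theta>" and i: "i \<in> {1..d}"
  shows "coprime (muinv (int p ^ k) (\<theta> (\<pi> (x i)) k)) (int p ^ k)"
    and "coprime (\<theta> (\<pi> (x i)) k) (int p ^ k)"
    and "[\<theta> (\<pi> (x i)) k * muinv (int p ^ k) (\<theta> (\<pi> (x i)) k) = 1] (mod int p ^ k)"
proof -
  show c: "coprime (\<theta> (\<pi> (x i)) k) (int p ^ k)"
    by (rule Zp_unit_coprime[OF prime thZx[OF or i]])
  show "coprime (muinv (int p ^ k) (\<theta> (\<pi> (x i)) k)) (int p ^ k)" using muinv_coprime[OF c] .
  show "[\<theta> (\<pi> (x i)) k * muinv (int p ^ k) (\<theta> (\<pi> (x i)) k) = 1] (mod int p ^ k)" using muinv[OF c] .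
qed

lemma D1:
  assumes or: "orientation p G TG \<theta>" and ku: "kummerian p G TG \<theta>" and i: "i \<in> {3..d}"
  shows "\<theta> (\<pi> (x i)) = zp_one p"
proof
  fix k
  have i1: "i \<in> {1..d}" using i by auto
  show "\<theta> (\<pi> (x i)) k = zp_one p k"
  proof (cases "k = 0")
    case True then show ?thesis using Zp_zero[OF thZx(1)[OF or i1]] zp_one_0 by simp
  next
    case False
    then have k: "k \<ge> 1" by simp
    define M where "M = int p ^ k"
    define lam where "lam j = \<theta> (\<pi> (x j)) k" for j
    have lamf: "(\<lambda>j. \<theta> (\<pi> (x j)) k) = lam" unfolding lam_def by simp
    have dv: "\<forall>j\<in>{1..d}. M dvd alphaf M p f n lam j" using alpha_dvd[OF or ku k] unfolding lamf M_def .
    have mc: "coprime (muinv M (lam j)) M" if "j \<in> {1..d}" for j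
      unfolding M_def lam_def using mu_cop(1)[OF or that] .
    have "M dvd (lam i - 1)"
    proof (cases "odd i")
      case True
      have "i \<noteq> d" using True deven by auto
      then have i2: "i + 1 \<in> {1..d}" using i by auto
      have "alphaf M p f n lam (i + 1) = (muinv M (lam i) * muinv M (lam (i + 1))) * (lam i - 1)"
        using True i by (simp add: alphaf_def)
      then have "M dvd (muinv M (lam i) * muinv M (lam (i + 1))) * (lam i - 1)" using dv i2 by metis
      moreover have "coprime (muinv M (lam i) * muinv M (lam (i + 1))) M" using mc i1 i2 by simp
      ultimately show ?thesis using cop_cancel by blast
    next
      case False
      then have i4: "i \<ge> 4" using i by (auto elim!: evenE)
      then have i2: "i - 1 \<in> {1..d}" using i by auto
      have oi: "odd (i - 1)" using False i4 by simp
      have "alphaf M p f n lam (i - 1) = - ((muinv M (lam (i - 1)) * muinv M (lam i)) * (lam i - 1))"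
      proof -
        have h: "i - 1 \<noteq> 1" "i - 1 \<noteq> 2" "i - 1 + 1 = i" using i4 by auto
        show ?thesis using oi h by (simp only: alphaf_def if_False if_True) simp
      qed
      then have "M dvd (muinv M (lam (i - 1)) * muinv M (lam i)) * (lam i - 1)" using dv i2
        by (metis dvd_minus_iff)
      moreover have "coprime (muinv M (lam (i - 1)) * muinv M (lam i)) M" using mc i1 i2 by simp
      ultimately show ?thesis using cop_cancel by blast
    qed
    then have "[\<theta> (\<pi> (x i)) k = 1] (mod int p ^ k)" unfolding M_def lam_def by (simp add: cong_iff_dvd_diff)
    then show ?thesis using Zp_eq_one[OF thZx(1)[OF or i1] p2 k] by simp
  qed
qed

lemma D2:
  assumes or: "orientation p G TG \<theta>" and ku: "kummerian p G TG \<theta>" and t1: "\<theta> (\<pi> (x 1)) = zp_one p"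
  shows "zp_pow p (zp_add p (zp_inv p (\<theta> (\<pi> (x 2)))) (zp_neg p (zp_one p))) n = zp_neg p (zp_q p f)"
proof
  fix k
  have i1: "1 \<in> {1..d}" and i2: "2 \<in> {1..d}" using d4 by auto
  define M where "M = int p ^ k"
  define w where "w = zp_inv p (\<theta> (\<pi> (x 2))) k"
  have lhs: "zp_pow p (zp_add p (zp_inv p (\<theta> (\<pi> (x 2)))) (zp_neg p (zp_one p))) n k
      = ((w + (- (1 mod M)) mod M) mod M) ^ n mod M"
    unfolding zp_pow_level w_def M_def by (simp add: zp_add_def zp_neg_def zp_one_def zp_of_int_def)
  have rhs: "zp_neg p (zp_q p f) k = (- (qval p f mod M)) mod M"
    unfolding zp_q_eq M_def by (simp add: zp_neg_def zp_of_int_def)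
  show "zp_pow p (zp_add p (zp_inv p (\<theta> (\<pi> (x 2)))) (zp_neg p (zp_one p))) n k = zp_neg p (zp_q p f) k"
  proof (cases "k = 0")
    case True then show ?thesis unfolding lhs rhs M_def by simp
  next
    case False
    then have k: "k \<ge> 1" by simp
    have M1: "M > 1" unfolding M_def using pk_gt1[OF k p2] .
    define lam where "lam j = \<theta> (\<pi> (x j)) k" for j
    have lamf: "(\<lambda>j. \<theta> (\<pi> (x j)) k) = lam" unfolding lam_def by simp
    have dv: "\<forall>j\<in>{1..d}. M dvd alphaf M p f n lam j" using alpha_dvd[OF or ku k] unfolding lamf M_def .
    define mu2 where "mu2 = muinv M (lam 2)"
    define mu1 where "mu1 = muinv M (lam 1)"
    have l1: "lam 1 = 1" unfolding lam_def t1 using zp_one_k[OF k p2] by simp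
    have mu1: "[mu1 = 1] (mod M)" unfolding mu1_def using muinv_1[of "lam 1" M] l1 by simp
    have lm2: "[lam 2 * mu2 = 1] (mod M)" unfolding mu2_def lam_def M_def using mu_cop(3)[OF or i2] .
    have lw: "[lam 2 * w = 1] (mod M)" unfolding w_def lam_def M_def
      using zp_inv_prop(2)[OF prime thZx[OF or i2]] .
    have wmu: "[w = mu2] (mod M)"
    proof -
      have "[w = w * 1] (mod M)" by simp
      also have "[w * 1 = w * (lam 2 * mu2)] (mod M)" using lm2 by (intro cong_mult cong_refl) (rule cong_sym)
      also have "w * (lam 2 * mu2) = (lam 2 * w) * mu2" by (simp add: ac_simps)
      also have "[(lam 2 * w) * mu2 = 1 * mu2] (mod M)" using lw by (intro cong_mult cong_refl)
      finally show ?thesis by simp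
    qed
    have "M dvd alphaf M p f n lam 1" using dv i1 by blast
    then have "M dvd qval p f + mu1 * (mu2 - 1) ^ n" unfolding alphaf_def mu1_def mu2_def using l1 Sqf_1 by simp
    then have c1: "[qval p f + mu1 * (mu2 - 1) ^ n = 0] (mod M)" by (simp add: cong_0_iff)
    have c15: "[qval p f + mu1 * (mu2 - 1) ^ n = qval p f + 1 * (mu2 - 1) ^ n] (mod M)"
      by (rule cong_add[OF cong_refl cong_mult[OF mu1 cong_refl]])
    have "[qval p f + 1 * (mu2 - 1) ^ n = 0] (mod M)" using cong_trans[OF cong_sym[OF c15] c1] .
    then have c2: "[qval p f + (mu2 - 1) ^ n = 0] (mod M)" by simp
    have c3: "[(w + (- (1 mod M)) mod M) mod M = mu2 - 1] (mod M)"
    proof -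
      have "[(w + (- (1 mod M)) mod M) mod M = w + (- (1 mod M))] (mod M)"
        by (simp add: cong_def mod_add_right_eq)
      also have "w + (- (1 mod M)) = w - 1" using M1 by simp
      also have "[w - 1 = mu2 - 1] (mod M)" using wmu by (intro cong_diff cong_refl)
      finally show ?thesis .
    qed
    have "[((w + (- (1 mod M)) mod M) mod M) ^ n = (mu2 - 1) ^ n] (mod M)" using c3 by (rule cong_pow)
    also have "[(mu2 - 1) ^ n = - qval p f] (mod M)" using c2 by (simp add: cong_iff_dvd_diff cong_0_iff algebra_simps)
    also have "[- qval p f = - (qval p f mod M)] (mod M)"
      by (simp add: cong_def mod_minus_eq)
    finally show ?thesis unfolding lhs rhs by (simp add: cong_def)
  qed
qed

lemma D3:
  assumes or: "orientation p G TG \<theta>" and ku: "kummerian p G TG \<theta>" and tf: "torsion_free_or p G \<theta>"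
    and t1: "\<theta> (\<pi> (x 1)) \<noteq> zp_one p"
  shows "\<theta> (\<pi> (x 2)) = zp_one p \<and> f = \<infinity>"
proof -
  have i1: "1 \<in> {1..d}" and i2: "2 \<in> {1..d}" using d4 by auto
  define a where "a = \<theta> (\<pi> (x 1))"
  define b where "b = \<theta> (\<pi> (x 2))"
  have aZ: "a \<in> Zp p" and a1: "a 1 = 1" unfolding a_def using thZx[OF or i1] by auto
  have bZ: "b \<in> Zp p" unfolding b_def using thZx[OF or i2] by auto
  obtain k0 where k0: "a k0 \<noteq> zp_one p k0" using t1 unfolding a_def by (meson ext)
  have k01: "k0 \<ge> 1" using k0 Zp_zero[OF aZ] zp_one_0 by (cases k0) auto
  have nd: "\<not> int p ^ k0 dvd (a k - 1)" if "k \<ge> k0" for k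
  proof
    assume "int p ^ k0 dvd (a k - 1)"
    then have "[a k = 1] (mod int p ^ k0)" by (simp add: cong_iff_dvd_diff)
    moreover have "[a k = a k0] (mod int p ^ k0)" by (rule Zp_cong_le[OF aZ that])
    ultimately have "[a k0 = 1] (mod int p ^ k0)" by (metis cong_sym cong_trans)
    then show False using Zp_eq_one[OF aZ p2 k01] k0 by simp
  qed
  have n1: "n - 1 \<ge> 1" using n2 by simp
  have alpha_at: "\<forall>j\<in>{1..d}. int p ^ k dvd alphaf (int p ^ k) p f n (\<lambda>j. \<theta> (\<pi> (x j)) k) j"
    if "k \<ge> 1" for k using alpha_dvd[OF or ku that] .
  have b1: "b = zp_one p"
  proof
    fix j
    show "b j = zp_one p j"
    proof (cases "j = 0")
      case True then show ?thesis using Zp_zero[OF bZ] zp_one_0 by simp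
    next
      case False
      then have j1: "j \<ge> 1" by simp
      define k where "k = k0 + (n - 1) * j"
      have kk0: "k \<ge> k0" and kj: "k \<ge> j" and k1: "k \<ge> 1" unfolding k_def using n1 k01 j1
        by (auto simp: trans_le_add2)
      define M where "M = int p ^ k"
      define mu1 where "mu1 = muinv M (a k)"
      define mu2 where "mu2 = muinv M (b k)"
      have "M dvd alphaf M p f n (\<lambda>j. \<theta> (\<pi> (x j)) k) 2" using alpha_at[OF k1] i2 unfolding M_def by blast
      then have "M dvd (mu1 * mu2) * ((mu2 - 1) ^ (n - 1) * (a k - 1))"
        unfolding alphaf_def mu1_def mu2_def a_def b_def by (simp add: ac_simps)
      moreover have "coprime (mu1 * mu2) M" unfolding mu1_def mu2_def M_def a_def b_def
        by (rule iffD2[OF coprime_mult_left_iff], rule conjI, rule mu_cop(1)[OF or i1], rule mu_cop(1)[OF or i2])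
      ultimately have "M dvd (mu2 - 1) ^ (n - 1) * (a k - 1)" using cop_cancel by blast
      then have "int p ^ (k0 + (n - 1) * j) dvd (mu2 - 1) ^ (n - 1) * (a k - 1)" unfolding M_def k_def .
      then have pj: "int p ^ j dvd (mu2 - 1)" using val2[OF prime n1 _ nd[OF kk0]] by blast
      have lm: "[b k * mu2 = 1] (mod M)" unfolding mu2_def b_def M_def using mu_cop(3)[OF or i2] .
      have pjM: "int p ^ j dvd M" unfolding M_def using kj by (simp add: le_imp_power_dvd)
      have "int p ^ j dvd (b k * mu2 - 1)" using lm pjM by (meson cong_iff_dvd_diff dvd_trans)
      moreover have "b k - 1 = (b k * mu2 - 1) - b k * (mu2 - 1)" by (simp add: algebra_simps)
      ultimately have "int p ^ j dvd (b k - 1)" using pj by (metis dvd_diff dvd_mult)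
      then have "[b k = 1] (mod int p ^ j)" by (simp add: cong_iff_dvd_diff)
      moreover have "[b k = b j] (mod int p ^ j)" by (rule Zp_cong_le[OF bZ kj])
      ultimately have "[b j = 1] (mod int p ^ j)" by (metis cong_sym cong_trans)
      then show ?thesis using Zp_eq_one[OF bZ p2 j1] by simp
    qed
  qed
  have finf: "f = \<infinity>"
  proof (rule ccontr)
    assume "f \<noteq> \<infinity>"
    then obtain m where m: "f = enat m" by (cases f) auto
    have m1: "m \<ge> 1" using f1 m by (simp add: one_enat_def)
    have m2: "p = 2 \<longrightarrow> m \<ge> 2" using f2 m by (simp add: numeral_eq_enat)
    define k where "k = k0 + m"
    have kk0: "k \<ge> k0" and k1: "k \<ge> 1" unfolding k_def using k01 by auto
    define M where "M = int p ^ k"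
    define mu1 where "mu1 = muinv M (a k)"
    define mu2 where "mu2 = muinv M (b k)"
    have bk: "b k = 1" using b1 zp_one_k[OF k1 p2] by simp
    have mu2_1: "[mu2 = 1] (mod M)" unfolding mu2_def using muinv_1[of "b k" M] bk by simp
    have "M dvd alphaf M p f n (\<lambda>j. \<theta> (\<pi> (x j)) k) 1" using alpha_at[OF k1] i1 unfolding M_def by blast
    then have d1: "M dvd Sqf p f (a k) + mu1 * (mu2 - 1) ^ n"
      unfolding alphaf_def mu1_def mu2_def a_def b_def by simp
    have "[(mu2 - 1) ^ n = (1 - 1) ^ n] (mod M)" using mu2_1 by (intro cong_pow cong_diff cong_refl)
    moreover have "(0::int) ^ n = 0" using n2 by simp
    ultimately have "[(mu2 - 1) ^ n = 0] (mod M)" by simp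
    then have "[Sqf p f (a k) + mu1 * (mu2 - 1) ^ n = Sqf p f (a k) + mu1 * 0] (mod M)"
      by (intro cong_add cong_mult cong_refl)
    then have "M dvd mu1 * (mu2 - 1) ^ n" by (simp add: cong_iff_dvd_diff)
    then have "M dvd Sqf p f (a k)" using d1 by (simp add: dvd_add_left_iff)
    then have "M dvd (\<Sum>i<p^m. a k ^ i)" unfolding Sqf_def m by simp
    then have "M dvd (a k - 1) * (\<Sum>i<p^m. a k ^ i)" by simp
    then have dd: "int p ^ (k0 + m) dvd (a k ^ (p ^ m) - 1)" unfolding M_def k_def power_diff_1_eq[symmetric] .
    have ca1: "[a k = 1] (mod int p)"
    proof -
      have "a k mod int p ^ 1 = a 1" by (rule Zp_mod_le[OF aZ k1])
      then show ?thesis using a1 p2 by (simp add: cong_def)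
    qed
    have ca4: "p = 2 \<longrightarrow> [a k = 1] (mod 4)"
    proof
      assume p2': "p = 2"
      then have "\<forall>g\<in>carrier G. \<theta> g 2 = 1" using tf unfolding torsion_free_or_def by auto
      then have a2: "a 2 = 1" unfolding a_def using xc[OF i1] by simp
      have "k \<ge> 2" using m2 p2' unfolding k_def by simp
      then have "a k mod int p ^ 2 = a 2" by (rule Zp_mod_le[OF aZ])
      then show "[a k = 1] (mod 4)" using a2 p2' by (simp add: cong_def)
    qed
    show False using torsion[OF prime ca1 ca4 nd[OF kk0], of m] dd by simp
  qed
  show ?thesis using b1 finf unfolding b_def by simp
qed

lemma main:
  shows "(\<forall>\<theta>. orientation p G TG \<theta> \<and> torsion_free_or p G \<theta> \<and> kummerian p G TG \<theta> \<longrightarrow>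
            (\<forall>i\<in>{3..d}. \<theta> (\<pi> (x i)) = zp_one p)
            \<and> ((\<theta> (\<pi> (x 1)) = zp_one p
                 \<and> zp_pow p (zp_add p (zp_inv p (\<theta> (\<pi> (x 2)))) (zp_neg p (zp_one p))) n
                     = zp_neg p (zp_q p f))
               \<or> (\<theta> (\<pi> (x 1)) \<noteq> zp_one p \<and> \<theta> (\<pi> (x 2)) = zp_one p \<and> f = \<infinity>)))
         \<and> (zp_neg p (zp_q p f) \<notin> zp_ideal_pow p n \<longrightarrow>
            (\<forall>\<theta>. orientation p G TG \<theta> \<and> torsion_free_or p G \<theta> \<longrightarrow> \<not> kummerian p G TG \<theta>))"
proof (intro conjI allI impI)
  fix \<theta> assume h: "orientation p G TG \<theta> \<and> torsion_free_or p G \<theta> \<and> kummerian p G TG \<theta>"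
  then have or: "orientation p G TG \<theta>" and tf: "torsion_free_or p G \<theta>" and ku: "kummerian p G TG \<theta>"
    by auto
  show "\<forall>i\<in>{3..d}. \<theta> (\<pi> (x i)) = zp_one p" using D1[OF or ku] by blast
  show "(\<theta> (\<pi> (x 1)) = zp_one p
                 \<and> zp_pow p (zp_add p (zp_inv p (\<theta> (\<pi> (x 2)))) (zp_neg p (zp_one p))) n
                     = zp_neg p (zp_q p f))
               \<or> (\<theta> (\<pi> (x 1)) \<noteq> zp_one p \<and> \<theta> (\<pi> (x 2)) = zp_one p \<and> f = \<infinity>)"
  proof (cases "\<theta> (\<pi> (x 1)) = zp_one p")
    case True then show ?thesis using D2[OF or ku True] by blast
  next
    case False then show ?thesis using D3[OF or ku tf False] by blast
  qed
next
  fix \<theta> assume nin: "zp_neg p (zp_q p f) \<notin> zp_ideal_pow p n"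
    and h: "orientation p G TG \<theta> \<and> torsion_free_or p G \<theta>"
  then have or: "orientation p G TG \<theta>" and tf: "torsion_free_or p G \<theta>" by auto
  show "\<not> kummerian p G TG \<theta>"
  proof
    assume ku: "kummerian p G TG \<theta>"
    have Z: "zp_neg p (zp_q p f) \<in> Zp p" unfolding zp_q_eq zp_neg_of_int by (rule zp_of_int_Zp[OF p0])
    have "zp_neg p (zp_q p f) n = 0"
    proof (cases "\<theta> (\<pi> (x 1)) = zp_one p")
      case True
      have i2: "2 \<in> {1..d}" using d4 by auto
      have n1: "n \<ge> 1" using n2 by simp
      define M where "M = int p ^ n"
      define w where "w = zp_inv p (\<theta> (\<pi> (x 2))) n"
      define z where "z = (w + (- (1 mod M)) mod M) mod M"
      have "zp_neg p (zp_q p f) n = zp_pow p (zp_add p (zp_inv p (\<theta> (\<pi> (x 2)))) (zp_neg p (zp_one p))) n n"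
        using D2[OF or ku True] by simp
      also have "\<dots> = z ^ n mod M"
        unfolding zp_pow_level z_def w_def M_def by (simp add: zp_add_def zp_neg_def zp_one_def zp_of_int_def)
      finally have eq: "zp_neg p (zp_q p f) n = z ^ n mod M" .
      have lw: "[\<theta> (\<pi> (x 2)) n * w = 1] (mod int p)" unfolding w_def
        using zp_inv_prop(2)[OF prime thZx[OF or i2], of n] by (rule cong_dvd_modulus) (use n1 in \<open>simp add: dvd_power\<close>)
      have l1: "[\<theta> (\<pi> (x 2)) n = 1] (mod int p)"
      proof -
        have "\<theta> (\<pi> (x 2)) n mod int p ^ 1 = \<theta> (\<pi> (x 2)) 1" by (rule Zp_mod_le[OF thZx(1)[OF or i2] n1])
        then show ?thesis using thZx(2)[OF or i2] p2 by (simp add: cong_def)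
      qed
      have "[1 * w = \<theta> (\<pi> (x 2)) n * w] (mod int p)" using l1 by (intro cong_mult cong_refl) (rule cong_sym)
      then have w1: "[w = 1] (mod int p)" using lw by (simp add: cong_trans)
      have M1: "M > 1" unfolding M_def using pk_gt1[OF n1 p2] .
      have "[z = w + (- (1 mod M))] (mod M)" unfolding z_def by (simp add: cong_def mod_add_right_eq)
      then have "[z = w - 1] (mod M)" using M1 by simp
      then have "[z = w - 1] (mod int p)" by (rule cong_dvd_modulus) (use n1 in \<open>simp add: M_def dvd_power\<close>)
      then have "[z = 0] (mod int p)" using w1 by (metis cong_diff cong_refl cong_trans diff_self)
      then have "int p dvd z" by (simp add: cong_0_iff)
      then have "int p ^ n dvd z ^ n" by (rule dvd_power_same)
      then show ?thesis unfolding eq M_def by simp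
    next
      case False
      then have "f = \<infinity>" using D3[OF or ku tf False] by blast
      then show ?thesis by (simp add: zp_q_def zp_neg_def zp_of_int_def)
    qed
    then have "zp_neg p (zp_q p f) \<in> zp_ideal_pow p n" using Z unfolding zp_ideal_pow_def by simp
    then show False using nin by simp
  qed
qed

end

theorem proposition3p8:
  fixes p d \<nu> n :: nat and f :: enat
    and F :: "('f, 'b) monoid_scheme" and TF :: "'f topology" and x :: "nat \<Rightarrow> 'f"
    and r :: "nat \<Rightarrow> 'f" and s :: 'f
    and G :: "('g, 'c) monoid_scheme" and TG :: "'g topology" and \<pi> :: "'f \<Rightarrow> 'g"
  assumes "Factorial_Ring.prime p" and "even d" and "d \<ge> 4" and "n \<ge> 2"
    and "f \<ge> 1" and "p = 2 \<longrightarrow> f \<ge> 2"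
    and free: "free_pro_p p F TF d x"
    and s_in: "s \<in> closed_derived F TF (closed_derived F TF (closed_gen F TF (x ` {3..d})))"
    and r0: "r 0 = qpow F p f (x 1) \<otimes>\<^bsub>F\<^esub> lcomm F (x 1) (x 2) n
                   \<otimes>\<^bsub>F\<^esub> comm_prod F x (d div 2 - 1) \<otimes>\<^bsub>F\<^esub> s"
    and rj: "\<forall>j\<in>{1..\<nu>}. r j \<in> closed_derived F TF (closed_gen F TF (x ` {3..d}))"
    and Gpro: "pro_p_group p G TG"
    and pi_hom: "\<pi> \<in> cont_hom F TF G TG" and pi_surj: "\<pi> ` carrier F = carrier G"
    and pi_ker: "{a \<in> carrier F. \<pi> a = \<one>\<^bsub>G\<^esub>} = closed_normal_gen F TF (r ` {0..\<nu>})"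
  shows "(\<forall>\<theta>. orientation p G TG \<theta> \<and> torsion_free_or p G \<theta> \<and> kummerian p G TG \<theta> \<longrightarrow>
            (\<forall>i\<in>{3..d}. \<theta> (\<pi> (x i)) = zp_one p)
            \<and> ((\<theta> (\<pi> (x 1)) = zp_one p
                 \<and> zp_pow p (zp_add p (zp_inv p (\<theta> (\<pi> (x 2)))) (zp_neg p (zp_one p))) n
                     = zp_neg p (zp_q p f))
               \<or> (\<theta> (\<pi> (x 1)) \<noteq> zp_one p \<and> \<theta> (\<pi> (x 2)) = zp_one p \<and> f = \<infinity>)))
         \<and> (zp_neg p (zp_q p f) \<notin> zp_ideal_pow p n \<longrightarrow>
            (\<forall>\<theta>. orientation p G TG \<theta> \<and> torsion_free_or p G \<theta> \<longrightarrow> \<not> kummerian p G TG \<theta>))"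
  proof -
  have P: "P38 p d \<nu> n f F TF x r s G TG \<pi>"
    by (rule P38.intro) (rule assms)+
  show ?thesis by (rule P38.main[OF P])
qed

end
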